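(* Let $N$ be a rooted binary phylogenetic network and $\mathcal{Z}=\{Z_1,\dots,Z_d\}$ its maximal zig-zag trail decomposition. Let $(F_n)$ be the Fibonacci sequence, $F_1=F_2=1$, $F_n=F_{n-1}+F_{n-2}$ ($n\ge3$), and $(L_n)$ the Lucas sequence, $L_1=1$, $L_2=3$, $L_n=L_{n-1}+L_{n-2}$ ($n\ge 3$). Then the number of support networks of $N$ is $$|\mathcal{A}_N|=\prod_{Z_i\text{ a fence}}F_{|E(Z_i)|}\cdot\prod_{Z_i\text{ a crown}}L_{|E(Z_i)|}.$$ Moreover, $|\mathcal{A}_N|=\Theta(\phi^{|E(N)|})$, where $\phi=(1+\sqrt5)/2$ is the golden ratio.
   Context: A rooted binary phylogenetic network on a non-empty finite set $X$ is a finite simple directed acyclic graph $N$ with: a unique vertex $\rho$ of in-degree $0$, having out-degree $1$ or $2$; leaf set (vertices of out-degree $0$) equal to $X$; every other vertex has in-degree and out-degree in $\{1,2\}$. Smoothing a vertex with in- and out-degree $1$ means suppressing it. A spanning subgraph $G$ of $N$ is a support network of $N$ if smoothing all vertices of $G$ with $\mathrm{indeg}_G=\mathrm{outdeg}_G=1$ yields a rooted binary phylogenetic network on $X$; $\mathcal{A}_N$ denotes the set of all support networks of $N$ (support networks being identified with their edge sets). A zig-zag trail in $N$ is a connected subgraph $Z$ with $m\ge1$ edges that can be ordered $(e_1,\dots,e_m)$ so that consecutive edges $e_i,e_{i+1}$ share a head or share a tail; it is maximal if not a proper subgraph of another zig-zag trail. The maximal zig-zag trails partition $E(N)$; this collection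 is the maximal zig-zag trail decomposition. A crown is a maximal zig-zag trail with an even number $m\ge4$ of edges that can be written cyclically as $v_0<v_1>v_2<\cdots>v_{m-2}<v_{m-1}>v_m=v_0$ (where $a<b$ denotes the edge $(b,a)$... i.e., the trail closes up into a cycle of alternating orientations). A fence is a maximal zig-zag trail that is not a crown. *)

theory Defs
  imports Complex_Main "HOL-Number_Theory.Fib"
begin

text \<open>Directed graphs are given by a vertex set V and an edge set E of pairs (tail, head).\<close>

definition indeg :: "('a \<times> 'a) set \<Rightarrow> 'a \<Rightarrow> nat" where
  "indeg E v = card {u. (u, v) \<in> E}"

definition outdeg :: "('a \<times> 'a) set \<Rightarrow> 'a \<Rightarrow> nat" where
  "outdeg E v = card {w. (v, w) \<in> E}"

definition rbpn :: "'a set \<Rightarrow> ('a \<times> 'a) set \<Rightarrow> 'a set \<Rightarrow> bool" where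
  "rbpn V E X \<longleftrightarrow>
     finite V \<and> E \<subseteq> V \<times> V \<and> (\<forall>v. (v, v) \<notin> E) \<and> acyclic E \<and>
     X \<noteq> {} \<and>
     (\<exists>!r. r \<in> V \<and> indeg E r = 0) \<and>
     (\<forall>r\<in>V. indeg E r = 0 \<longrightarrow> outdeg E r \<in> {1, 2}) \<and>
     X = {v \<in> V. outdeg E v = 0} \<and>
     (\<forall>v\<in>V. indeg E v \<noteq> 0 \<longrightarrow> indeg E v \<in> {1, 2} \<and> outdeg E v \<le> 2)"

definition walk :: "('a \<times> 'a) set \<Rightarrow> 'a list \<Rightarrow> bool" where
  "walk G xs \<longleftrightarrow> (\<forall>i. Suc i < length xs \<longrightarrow> (xs ! i, xs ! Suc i) \<in> G)"

definition smoothed_vertices :: "'a set \<Rightarrow> ('a \<times> 'a) set \<Rightarrow> 'a set" where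
  "smoothed_vertices V G = {v \<in> V. indeg G v = 1 \<and> outdeg G v = 1}"

definition smooth_edges :: "'a set \<Rightarrow> ('a \<times> 'a) set \<Rightarrow> ('a \<times> 'a) set" where
  "smooth_edges V G =
     {(u, w). u \<in> V - smoothed_vertices V G \<and> w \<in> V - smoothed_vertices V G \<and>
        (\<exists>ps. walk G (u # ps @ [w]) \<and> set ps \<subseteq> smoothed_vertices V G)}"

definition support_network :: "'a set \<Rightarrow> ('a \<times> 'a) set \<Rightarrow> 'a set \<Rightarrow> ('a \<times> 'a) set \<Rightarrow> bool" where
  "support_network V E X G \<longleftrightarrow>
     G \<subseteq> E \<and> rbpn (V - smoothed_vertices V G) (smooth_edges V G) X"

definition support_networks :: "'a set \<Rightarrow> ('a \<times> 'a) set \<Rightarrow> 'a set \<Rightarrow> ('a \<times> 'a) set set" where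
  "support_networks V E X = {G. support_network V E X G}"

definition zigzag_order :: "('a \<times> 'a) list \<Rightarrow> bool" where
  "zigzag_order es \<longleftrightarrow> es \<noteq> [] \<and> distinct es \<and>
     (\<forall>i. Suc i < length es \<longrightarrow>
        fst (es ! i) = fst (es ! Suc i) \<or> snd (es ! i) = snd (es ! Suc i))"

definition zigzag_trail :: "('a \<times> 'a) set \<Rightarrow> ('a \<times> 'a) set \<Rightarrow> bool" where
  "zigzag_trail E Z \<longleftrightarrow> Z \<subseteq> E \<and> (\<exists>es. set es = Z \<and> zigzag_order es)"

definition maximal_zigzag_trail :: "('a \<times> 'a) set \<Rightarrow> ('a \<times> 'a) set \<Rightarrow> bool" where
  "maximal_zigzag_trail E Z \<longleftrightarrow>
     zigzag_trail E Z \<and> \<not> (\<exists>Z'. zigzag_trail E Z' \<and> Z \<subset> Z')"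

text \<open>Crown: v0 < v1 > v2 < ... > v_m = v0, where a < b denotes the edge (b, a).\<close>
definition crown :: "('a \<times> 'a) set \<Rightarrow> ('a \<times> 'a) set \<Rightarrow> bool" where
  "crown E Z \<longleftrightarrow> maximal_zigzag_trail E Z \<and> even (card Z) \<and> card Z \<ge> 4 \<and>
     (\<exists>vs. length vs = card Z \<and>
        Z = {(vs ! i, vs ! (i - 1)) | i. i < card Z \<and> odd i}
          \<union> {(vs ! i, vs ! ((i + 1) mod card Z)) | i. i < card Z \<and> odd i})"

definition fence :: "('a \<times> 'a) set \<Rightarrow> ('a \<times> 'a) set \<Rightarrow> bool" where
  "fence E Z \<longleftrightarrow> maximal_zigzag_trail E Z \<and> \<not> crown E Z"

fun lucas :: "nat \<Rightarrow> nat" where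
  "lucas 0 = 2"
| "lucas (Suc 0) = 1"
| "lucas (Suc (Suc n)) = lucas (Suc n) + lucas n"

definition golden_ratio :: real where
  "golden_ratio = (1 + sqrt 5) / 2"

end

theory Submission
  imports Defs
begin


fun nff :: "bool list \<Rightarrow> bool" where
  "nff [] = True"
| "nff [a] = True"
| "nff (a # b # xs) = ((a \<or> b) \<and> nff (b # xs))"

lemma nff_iff: "nff bs \<longleftrightarrow> (\<forall>i. Suc i < length bs \<longrightarrow> bs ! i \<or> bs ! Suc i)"
proof (induction bs rule: nff.induct)
  case (3 a b xs)
  show ?case
  proof
    assume "nff (a # b # xs)"
    then show "\<forall>i. Suc i < length (a # b # xs) \<longrightarrow> (a # b # xs) ! i \<or> (a # b # xs) ! Suc i"
      using 3 by (auto simp: nth_Cons split: nat.splits)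
  next
    assume H: "\<forall>i. Suc i < length (a # b # xs) \<longrightarrow> (a # b # xs) ! i \<or> (a # b # xs) ! Suc i"
    have "a \<or> b" using H[rule_format, of 0] by simp
    moreover have "\<forall>i. Suc i < length (b # xs) \<longrightarrow> (b # xs) ! i \<or> (b # xs) ! Suc i"
      using H by (metis Suc_less_eq length_Cons nth_Cons_Suc)
    ultimately show "nff (a # b # xs)" using 3 by simp
  qed
qed auto

lemma len2: "length bs = Suc (Suc n) \<Longrightarrow> \<exists>a b xs. bs = a#b#xs \<and> length xs = n"
  by (auto simp: length_Suc_conv)
lemma len3: "length bs = Suc (Suc (Suc n)) \<Longrightarrow> \<exists>a b c xs. bs = a#b#c#xs \<and> length xs = n"
  by (auto simp: length_Suc_conv)

definition LL :: "nat \<Rightarrow> bool list set" where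
  "LL n = {bs. length bs = n \<and> nff bs}"

definition PP :: "nat \<Rightarrow> bool list set" where
  "PP n = {bs. length bs = n \<and> nff bs \<and> bs ! 0 \<and> bs ! (n - 1)}"

lemma finite_len: "finite {bs :: bool list. length bs = n}"
  using finite_lists_length_eq[of "UNIV :: bool set" n] by simp

lemma finite_lenP[simp]: "finite {bs :: bool list. length bs = n \<and> P bs}"
  by (rule finite_subset[OF _ finite_len[of n]]) auto

lemma nff_tl: "nff (x # xs) \<Longrightarrow> nff xs" by (cases xs) auto

lemma LL_fin: "finite (LL n)" unfolding LL_def by (rule finite_subset[OF _ finite_len[of n]]) auto
lemma PP_fin: "finite (PP n)" unfolding PP_def by (rule finite_subset[OF _ finite_len[of n]]) auto

lemma LL_rec: "LL (Suc (Suc n)) = Cons True ` LL (Suc n) \<union> (\<lambda>xs. False # True # xs) ` LL n"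
proof -
  have "bs \<in> Cons True ` LL (Suc n) \<union> (\<lambda>xs. False # True # xs) ` LL n" if H: "bs \<in> LL (Suc (Suc n))" for bs
  proof -
    obtain a b xs where bs: "bs = a # b # xs" and l: "length xs = n"
      using H len2[of bs n] unfolding LL_def by auto
    show ?thesis using H unfolding bs LL_def by (cases a; cases b; auto simp: l dest: nff_tl)
  qed
  moreover have "Cons True ` LL (Suc n) \<union> (\<lambda>xs. False # True # xs) ` LL n \<subseteq> LL (Suc (Suc n))"
  proof -
    have "nff (True # xs)" if "nff xs" for xs using that by (cases xs) auto
    then show ?thesis unfolding LL_def by auto
  qed
  ultimately show ?thesis by blast
qed

lemma LL_card: "card (LL n) = fib (n + 2)"
proof (induction n rule: fib.induct)
  case 1
  have "LL 0 = {[]}" unfolding LL_def by auto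
  then show ?case by simp
next
  case 2
  have "LL 1 = {[True], [False]}" unfolding LL_def
    by (auto simp: length_Suc_conv)
  then show ?case by (simp add: numeral_eq_Suc)
next
  case (3 n)
  have "card (LL (Suc (Suc n))) = card (Cons True ` LL (Suc n)) + card ((\<lambda>xs. False # True # xs) ` LL n)"
    unfolding LL_rec by (rule card_Un_disjoint) (auto intro: LL_fin)
  also have "\<dots> = card (LL (Suc n)) + card (LL n)"
    by (subst card_image, simp add: inj_on_def)+ simp
  finally show ?case using 3 by simp
qed

lemma PP_rec: "PP (Suc (Suc (Suc n))) = Cons True ` PP (Suc (Suc n)) \<union> (\<lambda>xs. True # False # xs) ` PP (Suc n)"
proof -
  have "bs \<in> Cons True ` PP (Suc (Suc n)) \<union> (\<lambda>xs. True # False # xs) ` PP (Suc n)" if H: "bs \<in> PP (Suc (Suc (Suc n)))" for bs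
  proof -
    obtain a b c xs where bs: "bs = a # b # c # xs" and l: "length xs = n"
      using H len3[of bs n] unfolding PP_def by auto
    show ?thesis using H unfolding bs PP_def by (cases a; cases b; cases c; auto simp: l)
  qed
  moreover have "Cons True ` PP (Suc (Suc n)) \<union> (\<lambda>xs. True # False # xs) ` PP (Suc n) \<subseteq> PP (Suc (Suc (Suc n)))"
  proof
    fix bs assume "bs \<in> Cons True ` PP (Suc (Suc n)) \<union> (\<lambda>xs. True # False # xs) ` PP (Suc n)"
    then show "bs \<in> PP (Suc (Suc (Suc n)))"
    proof
      assume "bs \<in> Cons True ` PP (Suc (Suc n))"
      then obtain xs where "bs = True # xs" "length xs = Suc (Suc n)" "nff xs" "xs ! 0" "xs ! Suc n"
        unfolding PP_def by auto
      then show ?thesis unfolding PP_def by (cases xs) auto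
    next
      assume "bs \<in> (\<lambda>xs. True # False # xs) ` PP (Suc n)"
      then obtain xs where "bs = True # False # xs" "length xs = Suc n" "nff xs" "xs ! 0" "xs ! n"
        unfolding PP_def by auto
      then show ?thesis unfolding PP_def by (cases xs) auto
    qed
  qed
  ultimately show ?thesis by blast
qed

lemma PP_card: "card (PP (Suc n)) = fib (Suc n)"
proof (induction n rule: fib.induct)
  case 1
  have "PP 1 = {[True]}" unfolding PP_def by (auto simp: length_Suc_conv)
  then show ?case by simp
next
  case 2
  have "PP 2 = {[True, True]}" unfolding PP_def by (auto simp: length_Suc_conv numeral_eq_Suc)
  then show ?case by (simp add: numeral_eq_Suc)
next
  case (3 n)
  have "card (PP (Suc (Suc (Suc n)))) = card (Cons True ` PP (Suc (Suc n))) + card ((\<lambda>xs. True # False # xs) ` PP (Suc n))"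
    unfolding PP_rec by (rule card_Un_disjoint) (auto simp: PP_def)
  also have "\<dots> = card (PP (Suc (Suc n))) + card (PP (Suc n))"
    by (subst card_image, simp add: inj_on_def)+ simp
  finally show ?case using 3 by simp
qed

lemma lucas_fib: "lucas (Suc n) = fib (Suc (Suc n)) + fib n"
  by (induction n rule: fib.induct) auto

definition CC :: "nat \<Rightarrow> bool list set" where
  "CC m = {bs. length bs = m \<and> (\<forall>i<m. bs ! i \<or> bs ! ((i + 1) mod m))}"

lemma CC_alt: "CC m = {bs. length bs = m \<and> nff bs \<and> (m > 0 \<longrightarrow> bs ! (m - 1) \<or> bs ! 0)}"
proof -
  have "(\<forall>i<m. bs ! i \<or> bs ! ((i + 1) mod m)) \<longleftrightarrow> nff bs \<and> (m > 0 \<longrightarrow> bs ! (m - 1) \<or> bs ! 0)"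
    if "length bs = m" for bs
  proof
    assume H: "\<forall>i<m. bs ! i \<or> bs ! ((i + 1) mod m)"
    have "nff bs" unfolding nff_iff
    proof (intro allI impI)
      fix i assume "Suc i < length bs"
      then show "bs ! i \<or> bs ! Suc i" using H[rule_format, of i] that by simp
    qed
    moreover have "m > 0 \<longrightarrow> bs ! (m - 1) \<or> bs ! 0" using H[rule_format, of "m - 1"] by simp
    ultimately show "nff bs \<and> (m > 0 \<longrightarrow> bs ! (m - 1) \<or> bs ! 0)" by blast
  next
    assume H: "nff bs \<and> (m > 0 \<longrightarrow> bs ! (m - 1) \<or> bs ! 0)"
    show "\<forall>i<m. bs ! i \<or> bs ! ((i + 1) mod m)"
    proof (intro allI impI)
      fix i assume i: "i < m"
      show "bs ! i \<or> bs ! ((i + 1) mod m)"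
      proof (cases "Suc i < m")
        case True
        then show ?thesis using H that unfolding nff_iff by auto
      next
        case False
        then have "Suc i = m" using i by auto
        then have "i = m - 1" "(i + 1) mod m = 0" by auto
        then show ?thesis using H i by auto
      qed
    qed
  qed
  then show ?thesis unfolding CC_def by auto
qed

lemma CC_card: "card (CC (Suc (Suc n))) = lucas (Suc (Suc n))"
proof -
  let ?m = "Suc (Suc n)"
  have eq: "CC ?m = Cons True ` LL (Suc n) \<union> Cons False ` PP (Suc n)"
  proof -
    have "bs \<in> Cons True ` LL (Suc n) \<union> Cons False ` PP (Suc n)" if H: "bs \<in> CC ?m" for bs
    proof -
      obtain a b xs where bs: "bs = a # b # xs" and l: "length xs = n"
        using H len2[of bs n] unfolding CC_alt by auto
      have lb: "bs ! (?m - 1) = (b # xs) ! n" unfolding bs by simp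
      show ?thesis using H lb unfolding bs CC_alt LL_def PP_def by (cases a; cases b; auto simp: l)
    qed
    moreover have "Cons True ` LL (Suc n) \<union> Cons False ` PP (Suc n) \<subseteq> CC ?m"
    proof
      fix bs assume "bs \<in> Cons True ` LL (Suc n) \<union> Cons False ` PP (Suc n)"
      then show "bs \<in> CC ?m"
      proof
        assume "bs \<in> Cons True ` LL (Suc n)"
        then obtain xs where "bs = True # xs" "length xs = Suc n" "nff xs" unfolding LL_def by auto
        then show ?thesis unfolding CC_alt by (cases xs) auto
      next
        assume "bs \<in> Cons False ` PP (Suc n)"
        then obtain xs where "bs = False # xs" "length xs = Suc n" "nff xs" "xs ! 0" "xs ! n" unfolding PP_def by auto
        then show ?thesis unfolding CC_alt by (cases xs) auto
      qed
    qed
    ultimately show ?thesis by blast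
  qed
  have "card (CC ?m) = card (Cons True ` LL (Suc n)) + card (Cons False ` PP (Suc n))"
    unfolding eq by (rule card_Un_disjoint) (auto intro: LL_fin PP_fin)
  also have "\<dots> = card (LL (Suc n)) + card (PP (Suc n))"
    by (subst card_image, simp)+ simp
  also have "\<dots> = lucas ?m" unfolding LL_card PP_card lucas_fib by simp
  finally show ?thesis .
qed



definition shr :: "('a \<times> 'a) \<Rightarrow> ('a \<times> 'a) \<Rightarrow> bool" where
  "shr e f \<longleftrightarrow> fst e = fst f \<or> snd e = snd f"

definition dbd :: "('a \<times> 'a) set \<Rightarrow> bool" where
  "dbd E \<longleftrightarrow> (\<forall>e. card {f\<in>E. fst f = fst e} \<le> 2 \<and> card {f\<in>E. snd f = snd e} \<le> 2)"

definition cov :: "('a \<times> 'a) set \<Rightarrow> ('a \<times> 'a) set set" where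
  "cov E = {G. G \<subseteq> E \<and> fst ` G = fst ` E \<and> snd ` G = snd ` E}"

lemma shr_sym: "shr e f \<longleftrightarrow> shr f e" unfolding shr_def by auto

lemma card3: "finite A \<Longrightarrow> a \<in> A \<Longrightarrow> b \<in> A \<Longrightarrow> c \<in> A \<Longrightarrow> a \<noteq> b \<Longrightarrow> a \<noteq> c \<Longrightarrow> b \<noteq> c \<Longrightarrow> 3 \<le> card A"
proof -
  assume "finite A" "a \<in> A" "b \<in> A" "c \<in> A" "a \<noteq> b" "a \<noteq> c" "b \<noteq> c"
  then have "card {a, b, c} \<le> card A" by (intro card_mono) auto
  then show ?thesis using \<open>a \<noteq> b\<close> \<open>a \<noteq> c\<close> \<open>b \<noteq> c\<close> by simp
qed

lemma three_fst:
  assumes "finite E" "dbd E" "a \<in> E" "b \<in> E" "c \<in> E" "a \<noteq> b" "a \<noteq> c" "b \<noteq> c"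
    "fst b = fst a" "fst c = fst a"
  shows False
proof -
  have "3 \<le> card {f\<in>E. fst f = fst a}" by (rule card3[of _ a b c]) (use assms in auto)
  moreover have "card {f\<in>E. fst f = fst a} \<le> 2" using assms(2) unfolding dbd_def by blast
  ultimately show False by linarith
qed

lemma three_snd:
  assumes "finite E" "dbd E" "a \<in> E" "b \<in> E" "c \<in> E" "a \<noteq> b" "a \<noteq> c" "b \<noteq> c"
    "snd b = snd a" "snd c = snd a"
  shows False
proof -
  have "3 \<le> card {f\<in>E. snd f = snd a}" by (rule card3[of _ a b c]) (use assms in auto)
  moreover have "card {f\<in>E. snd f = snd a} \<le> 2" using assms(2) unfolding dbd_def by blast
  ultimately show False by linarith
qed

lemma two_nbrs:
  assumes "finite E" "dbd E" "a \<in> E" "b \<in> E" "c \<in> E" "a \<noteq> b" "a \<noteq> c" "b \<noteq> c"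
    "shr a b" "shr a c"
  shows "(fst b = fst a \<and> snd c = snd a) \<or> (snd b = snd a \<and> fst c = fst a)"
proof -
  have hb: "fst b = fst a \<or> snd b = snd a" and hc: "fst c = fst a \<or> snd c = snd a"
    using assms(9,10) unfolding shr_def by auto
  have nf: "\<not> (fst b = fst a \<and> fst c = fst a)" using three_fst[OF assms(1-8)] by blast
  have ns: "\<not> (snd b = snd a \<and> snd c = snd a)" using three_snd[OF assms(1-8)] by blast
  show ?thesis using hb hc nf ns by blast
qed

lemma dbd_subset:
  fixes E :: "('a \<times> 'a) set"
  assumes "finite E" "dbd E" "Z \<subseteq> E" shows "dbd Z"
  unfolding dbd_def
proof
  fix e :: "'a \<times> 'a"
  have "card {f\<in>Z. fst f = fst e} \<le> card {f\<in>E. fst f = fst e}"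
    by (rule card_mono) (use assms in auto)
  moreover have "card {f\<in>Z. snd f = snd e} \<le> card {f\<in>E. snd f = snd e}"
    by (rule card_mono) (use assms in auto)
  ultimately show "card {f\<in>Z. fst f = fst e} \<le> 2 \<and> card {f\<in>Z. snd f = snd e} \<le> 2"
    using assms(2) unfolding dbd_def by (meson le_trans)
qed

lemma pair_hit:
  assumes "finite E" "dbd E" "Z \<subseteq> E" "G \<in> cov Z" "a \<in> Z" "b \<in> Z" "a \<noteq> b" "shr a b"
  shows "a \<in> G \<or> b \<in> G"
proof -
  have GZ: "G \<subseteq> Z" "fst ` G = fst ` Z" "snd ` G = snd ` Z" using assms(4) unfolding cov_def by auto
  have fZ: "finite Z" using assms(1,3) finite_subset by blast
  have dZ: "dbd Z" using dbd_subset assms(1,2,3) by blast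
  show ?thesis
  proof (cases "fst a = fst b")
    case True
    obtain g where g: "g \<in> G" "fst g = fst a" using GZ(2) assms(5) by (metis image_iff)
    show ?thesis
    proof (rule ccontr)
      assume "\<not> ?thesis"
      then have "g \<noteq> a" "g \<noteq> b" using g by auto
      then show False using three_fst[OF fZ dZ assms(5) assms(6), of g] g GZ(1) assms(7) True by auto
    qed
  next
    case False
    then have S: "snd a = snd b" using assms(8) unfolding shr_def by auto
    obtain g where g: "g \<in> G" "snd g = snd a" using GZ(3) assms(5) by (metis image_iff)
    show ?thesis
    proof (rule ccontr)
      assume "\<not> ?thesis"
      then have "g \<noteq> a" "g \<noteq> b" using g by auto
      then show False using three_snd[OF fZ dZ assms(5) assms(6), of g] g GZ(1) assms(7) S by auto
    qed
  qed
qed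


lemma zz_step: "zigzag_order es \<Longrightarrow> Suc i < length es \<Longrightarrow> shr (es ! i) (es ! Suc i)"
  unfolding zigzag_order_def shr_def by auto

lemma interior:
  assumes "zigzag_order es" "set es \<subseteq> E" "finite E" "dbd E" "0 < i" "Suc i < length es"
  shows "(fst (es ! (i - 1)) = fst (es ! i) \<and> snd (es ! Suc i) = snd (es ! i)) \<or>
         (snd (es ! (i - 1)) = snd (es ! i) \<and> fst (es ! Suc i) = fst (es ! i))"
proof -
  have d: "distinct es" using assms(1) unfolding zigzag_order_def by auto
  have s1': "shr (es ! (i - 1)) (es ! i)" using zz_step[OF assms(1), of "i - 1"] assms(5,6) by simp
  have s1: "shr (es ! i) (es ! (i - 1))" using s1' shr_sym by blast
  have s2: "shr (es ! i) (es ! Suc i)" using zz_step[OF assms(1), of i] assms(6) by auto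
  have n: "es ! i \<noteq> es ! (i - 1)" "es ! i \<noteq> es ! Suc i" "es ! (i - 1) \<noteq> es ! Suc i"
    using d assms(5,6) by (auto simp: nth_eq_iff_index_eq)
  have m: "es ! i \<in> E" "es ! (i - 1) \<in> E" "es ! Suc i \<in> E" using assms(2,5,6) by auto
  show ?thesis using two_nbrs[OF assms(3,4) m n s1 s2] by auto
qed

lemma closure:
  assumes "maximal_zigzag_trail E Z" "finite E" "dbd E" "e \<in> Z" "f \<in> E" "shr e f"
  shows "f \<in> Z"
proof (rule ccontr)
  assume fZ: "f \<notin> Z"
  obtain es where es: "set es = Z" "zigzag_order es" "Z \<subseteq> E"
    using assms(1) unfolding maximal_zigzag_trail_def zigzag_trail_def by auto
  have d: "distinct es" "es \<noteq> []" using es(2) unfolding zigzag_order_def by auto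
  obtain i where i: "i < length es" "es ! i = e" using assms(4) es(1) by (metis in_set_conv_nth)
  have notbig: "\<not> (zigzag_trail E (insert f Z))"
  proof
    assume "zigzag_trail E (insert f Z)"
    then have "Z \<subset> insert f Z" using fZ by auto
    then show False using assms(1) \<open>zigzag_trail E (insert f Z)\<close> unfolding maximal_zigzag_trail_def by blast
  qed
  show False
  proof (cases "i = 0")
    case True
    have "zigzag_order (f # es)"
      unfolding zigzag_order_def
    proof (intro conjI allI impI)
      show "distinct (f # es)" using d fZ es(1) by auto
      fix j assume j: "Suc j < length (f # es)"
      show "fst ((f # es) ! j) = fst ((f # es) ! Suc j) \<or> snd ((f # es) ! j) = snd ((f # es) ! Suc j)"
      proof (cases j)
        case 0
        then show ?thesis using True i assms(6) unfolding shr_def by auto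
      next
        case (Suc k)
        then show ?thesis using es(2) j unfolding zigzag_order_def by auto
      qed
    qed simp
    then have "zigzag_trail E (insert f Z)" unfolding zigzag_trail_def using es assms(5)
      by (intro conjI exI[of _ "f # es"]) auto
    then show False using notbig by simp
  next
    case False
    show False
    proof (cases "Suc i = length es")
      case True
      have "zigzag_order (es @ [f])"
        unfolding zigzag_order_def
      proof (intro conjI allI impI)
        show "distinct (es @ [f])" using d fZ es(1) by auto
        fix j assume j: "Suc j < length (es @ [f])"
        show "fst ((es @ [f]) ! j) = fst ((es @ [f]) ! Suc j) \<or> snd ((es @ [f]) ! j) = snd ((es @ [f]) ! Suc j)"
        proof (cases "Suc j = length es")
          case True
          then have "j = i" using \<open>Suc i = length es\<close> by simp
          then show ?thesis using True i assms(6) unfolding shr_def by (auto simp: nth_append)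
        next
          case False
          then have "Suc j < length es" using j by simp
          then show ?thesis using es(2) unfolding zigzag_order_def by (auto simp: nth_append)
        qed
      qed simp
      then have "zigzag_trail E (insert f Z)" unfolding zigzag_trail_def using es assms(5)
        by (intro conjI exI[of _ "es @ [f]"]) auto
      then show False using notbig by simp
    next
      case False
      then have si: "Suc i < length es" using i by simp
      have ii: "0 < i" using \<open>i \<noteq> 0\<close> by simp
      have m: "es ! (i - 1) \<in> E" "es ! Suc i \<in> E" "e \<in> E" using es si assms(4) by auto
      have n: "es ! (i - 1) \<noteq> e" "es ! Suc i \<noteq> e" "f \<noteq> es ! (i - 1)" "f \<noteq> es ! Suc i" "f \<noteq> e"
        using d i si ii fZ es(1) assms(4) by (auto simp: nth_eq_iff_index_eq)
      from interior[OF es(2) _ assms(2,3) ii si] es(1,3) i(2)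
      consider "fst (es ! (i - 1)) = fst e" "snd (es ! Suc i) = snd e"
        | "snd (es ! (i - 1)) = snd e" "fst (es ! Suc i) = fst e" by auto
      then show False
      proof cases
        case 1
        then show False using assms(6) three_fst[OF assms(2,3) m(3) m(1) assms(5)] three_snd[OF assms(2,3) m(3) m(2) assms(5)] n
          unfolding shr_def by auto
      next
        case 2
        then show False using assms(6) three_snd[OF assms(2,3) m(3) m(1) assms(5)] three_fst[OF assms(2,3) m(3) m(2) assms(5)] n
          unfolding shr_def by auto
      qed
    qed
  qed
qed

lemma trail_in_closed:
  assumes "zigzag_order es" "\<forall>e\<in>C. \<forall>f\<in>set es. shr e f \<longrightarrow> f \<in> C" "set es \<inter> C \<noteq> {}"
  shows "set es \<subseteq> C"
proof -
  have step: "es ! i \<in> C \<longleftrightarrow> es ! Suc i \<in> C" if "Suc i < length es" for i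
    using zz_step[OF assms(1) that] assms(2) that shr_sym by (metis Suc_lessD nth_mem)
  have all: "es ! i \<in> C \<longleftrightarrow> es ! 0 \<in> C" if "i < length es" for i
    using that by (induction i) (auto simp: step)
  obtain x where "x \<in> set es" "x \<in> C" using assms(3) by auto
  then obtain k where "k < length es" "es ! k \<in> C" by (metis in_set_conv_nth)
  then have "es ! 0 \<in> C" using all by blast
  show ?thesis
  proof
    fix x assume "x \<in> set es"
    then obtain j where "j < length es" "es ! j = x" by (metis in_set_conv_nth)
    then show "x \<in> C" using all \<open>es ! 0 \<in> C\<close> by blast
  qed
qed



lemma card_bool_map:
  assumes "distinct es"
  shows "card {G. G \<subseteq> set es \<and> P (map (\<lambda>e. e \<in> G) es)} = card {bs. length bs = length es \<and> P bs}"
proof -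
  let ?f = "\<lambda>G. map (\<lambda>e. e \<in> G) es"
  have inj: "inj_on ?f {G. G \<subseteq> set es \<and> P (?f G)}"
  proof (rule inj_onI)
    fix G G' assume G: "G \<in> {G. G \<subseteq> set es \<and> P (?f G)}" and G': "G' \<in> {G. G \<subseteq> set es \<and> P (?f G)}"
      and eq: "?f G = ?f G'"
    have "\<forall>e\<in>set es. (e \<in> G) = (e \<in> G')" using eq by (simp add: map_eq_conv)
    then show "G = G'" using G G' by blast
  qed
  have img: "?f ` {G. G \<subseteq> set es \<and> P (?f G)} = {bs. length bs = length es \<and> P bs}"
  proof
    show "?f ` {G. G \<subseteq> set es \<and> P (?f G)} \<subseteq> {bs. length bs = length es \<and> P bs}" by auto
  next
    show "{bs. length bs = length es \<and> P bs} \<subseteq> ?f ` {G. G \<subseteq> set es \<and> P (?f G)}"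
    proof
      fix bs assume bs: "bs \<in> {bs. length bs = length es \<and> P bs}"
      define G where "G = {es ! i | i. i < length es \<and> bs ! i}"
      have "?f G = bs"
      proof (rule nth_equalityI)
        show "length (?f G) = length bs" using bs by simp
        fix j assume "j < length (?f G)"
        then have j: "j < length es" by simp
        have "es ! j \<in> G \<longleftrightarrow> bs ! j"
          unfolding G_def using j assms by (auto simp: nth_eq_iff_index_eq)
        then show "?f G ! j = bs ! j" using j by simp
      qed
      moreover have "G \<subseteq> set es" unfolding G_def by auto
      ultimately show "bs \<in> ?f ` {G. G \<subseteq> set es \<and> P (?f G)}" using bs by (metis (mono_tags, lifting) image_eqI mem_Collect_eq)
    qed
  qed
  show ?thesis using card_image[OF inj] img by simp
qed

lemma img_eq: "G \<subseteq> Z \<Longrightarrow> (h ` G = h ` Z) \<longleftrightarrow> (\<forall>e\<in>Z. \<exists>g\<in>G. h g = h e)"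
proof
  assume GZ: "G \<subseteq> Z" and L: "h ` G = h ` Z"
  show "\<forall>e\<in>Z. \<exists>g\<in>G. h g = h e"
  proof
    fix e assume "e \<in> Z"
    then have "h e \<in> h ` G" using L by auto
    then show "\<exists>g\<in>G. h g = h e" by force
  qed
next
  assume GZ: "G \<subseteq> Z" and R: "\<forall>e\<in>Z. \<exists>g\<in>G. h g = h e"
  show "h ` G = h ` Z"
  proof
    show "h ` G \<subseteq> h ` Z" using GZ by auto
    show "h ` Z \<subseteq> h ` G"
    proof
      fix y assume "y \<in> h ` Z"
      then obtain e where "e \<in> Z" "y = h e" by auto
      then obtain g where "g \<in> G" "h g = h e" using R by blast
      then show "y \<in> h ` G" using \<open>y = h e\<close> by (metis imageI)
    qed
  qed
qed

lemma cov_iff: "G \<in> cov Z \<longleftrightarrow> G \<subseteq> Z \<and> (\<forall>e\<in>Z. (\<exists>g\<in>G. fst g = fst e) \<and> (\<exists>g\<in>G. snd g = snd e))"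
proof (cases "G \<subseteq> Z")
  case True
  show ?thesis unfolding cov_def using img_eq[OF True, of fst] img_eq[OF True, of snd] True by auto
next
  case False then show ?thesis unfolding cov_def by auto
qed

definition cycl :: "('a \<times> 'a) list \<Rightarrow> bool" where
  "cycl es \<longleftrightarrow> 3 \<le> length es \<and> shr (es ! 0) (es ! (length es - 1))"

locale comp =
  fixes E :: "('a \<times> 'a) set" and es :: "('a \<times> 'a) list"
  assumes finE: "finite E" and dE: "dbd E" and sub: "set es \<subseteq> E" and zz: "zigzag_order es"
begin

lemma dist: "distinct es" and ne: "es \<noteq> []" using zz unfolding zigzag_order_def by auto

lemma mem: "i < length es \<Longrightarrow> es ! i \<in> E" using sub by auto

lemma neq: "i < length es \<Longrightarrow> j < length es \<Longrightarrow> i \<noteq> j \<Longrightarrow> es ! i \<noteq> es ! j"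
  using dist by (simp add: nth_eq_iff_index_eq)

lemma path_nbr0:
  assumes nc: "\<not> cycl es" and f: "f \<in> set es" "f \<noteq> es ! 0" "shr (es ! 0) f"
  shows "f = es ! 1"
proof -
  obtain j where j: "j < length es" "es ! j = f" using f(1) by (metis in_set_conv_nth)
  have j0: "j \<noteq> 0" using j f(2) by (cases j) auto
  show ?thesis
  proof (cases "j = 1")
    case True then show ?thesis using j by simp
  next
    case False
    show ?thesis
    proof (cases "j = length es - 1")
      case True
      then have "cycl es" unfolding cycl_def using j j0 False f(3) by auto
      then show ?thesis using nc by simp
    next
      case False
      then have jj: "0 < j" "Suc j < length es" using j j0 by auto
      have n: "es ! 0 \<noteq> es ! (j - 1)" "es ! 0 \<noteq> es ! j" "es ! 0 \<noteq> es ! Suc j"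
        "es ! j \<noteq> es ! (j - 1)" "es ! j \<noteq> es ! Suc j"
        using neq[of 0 "j - 1"] neq[of 0 j] neq[of 0 "Suc j"] neq[of j "j - 1"] neq[of j "Suc j"] jj \<open>j \<noteq> 1\<close> ne by auto
      have m: "es ! 0 \<in> E" "es ! (j - 1) \<in> E" "es ! j \<in> E" "es ! Suc j \<in> E" using mem[of 0] mem[of "j - 1"] mem[of j] mem[of "Suc j"] jj ne by auto
      from interior[OF zz sub finE dE jj]
      consider "fst (es ! (j - 1)) = fst (es ! j)" "snd (es ! Suc j) = snd (es ! j)"
        | "snd (es ! (j - 1)) = snd (es ! j)" "fst (es ! Suc j) = fst (es ! j)" by auto
      then show ?thesis
      proof cases
        case 1
        then show ?thesis using f(3) j three_fst[OF finE dE m(3) m(2) m(1)] three_snd[OF finE dE m(3) m(4) m(1)] n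
          unfolding shr_def by auto
      next
        case 2
        then show ?thesis using f(3) j three_snd[OF finE dE m(3) m(2) m(1)] three_fst[OF finE dE m(3) m(4) m(1)] n
          unfolding shr_def by auto
      qed
    qed
  qed
qed

lemma path_nbrL:
  assumes nc: "\<not> cycl es" and f: "f \<in> set es" "f \<noteq> es ! (length es - 1)" "shr (es ! (length es - 1)) f"
  shows "f = es ! (length es - 2)"
proof -
  let ?m = "length es"
  obtain j where j: "j < length es" "es ! j = f" using f(1) by (metis in_set_conv_nth)
  have j0: "j \<noteq> ?m - 1" using j f(2) by auto
  show ?thesis
  proof (cases "j = ?m - 2")
    case True then show ?thesis using j by simp
  next
    case False
    show ?thesis
    proof (cases "j = 0")
      case True
      have "shr (es ! 0) (es ! (?m - 1))" using f(3) j True shr_sym by metis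
      then have "cycl es" unfolding cycl_def using j j0 False True by auto
      then show ?thesis using nc by simp
    next
      case False
      then have jj: "0 < j" "Suc j < length es" using j j0 by auto
      have n: "es ! (?m - 1) \<noteq> es ! (j - 1)" "es ! (?m - 1) \<noteq> es ! j" "es ! (?m - 1) \<noteq> es ! Suc j"
        "es ! j \<noteq> es ! (j - 1)" "es ! j \<noteq> es ! Suc j"
        using neq jj j0 \<open>j \<noteq> ?m - 2\<close> by auto
      have m: "es ! (?m - 1) \<in> E" "es ! (j - 1) \<in> E" "es ! j \<in> E" "es ! Suc j \<in> E" using mem jj by auto
      from interior[OF zz sub finE dE jj]
      consider "fst (es ! (j - 1)) = fst (es ! j)" "snd (es ! Suc j) = snd (es ! j)"
        | "snd (es ! (j - 1)) = snd (es ! j)" "fst (es ! Suc j) = fst (es ! j)" by auto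
      then show ?thesis
      proof cases
        case 1
        then show ?thesis using f(3) j three_fst[OF finE dE m(3) m(2) m(1)] three_snd[OF finE dE m(3) m(4) m(1)] n
          unfolding shr_def by auto
      next
        case 2
        then show ?thesis using f(3) j three_snd[OF finE dE m(3) m(2) m(1)] three_fst[OF finE dE m(3) m(4) m(1)] n
          unfolding shr_def by auto
      qed
    qed
  qed
qed

lemma end_in:
  assumes G: "G \<in> cov (set es)" and k: "k < length es"
    and nb: "\<And>f. f \<in> set es \<Longrightarrow> f \<noteq> es ! k \<Longrightarrow> shr (es ! k) f \<Longrightarrow> f = x"
  shows "es ! k \<in> G"
proof -
  have ek: "es ! k \<in> set es" using k by simp
  obtain g1 where g1: "g1 \<in> G" "fst g1 = fst (es ! k)" using G ek unfolding cov_iff by blast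
  obtain g2 where g2: "g2 \<in> G" "snd g2 = snd (es ! k)" using G ek unfolding cov_iff by blast
  have GZ: "G \<subseteq> set es" using G unfolding cov_iff by blast
  show ?thesis
  proof (rule ccontr)
    assume "es ! k \<notin> G"
    then have "g1 \<noteq> es ! k" "g2 \<noteq> es ! k" using g1 g2 by auto
    then have "g1 = x" "g2 = x" using nb[of g1] nb[of g2] g1 g2 GZ unfolding shr_def by auto
    then have "g1 = es ! k" using g1 g2 by (metis prod_eqI)
    then show False using \<open>g1 \<noteq> es ! k\<close> by simp
  qed
qed

lemma path_cov:
  assumes nc: "\<not> cycl es"
  shows "card (cov (set es)) = fib (length es)"
proof -
  let ?m = "length es"
  let ?Q = "\<lambda>bs. nff bs \<and> bs ! 0 \<and> bs ! (?m - 1)"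
  have eq: "cov (set es) = {G. G \<subseteq> set es \<and> ?Q (map (\<lambda>e. e \<in> G) es)}"
  proof (intro set_eqI iffI)
    fix G assume G: "G \<in> cov (set es)"
    have GZ: "G \<subseteq> set es" using G unfolding cov_iff by blast
    have e0: "es ! 0 \<in> G" using end_in[OF G _ path_nbr0[OF nc]] ne by auto
    have eL: "es ! (?m - 1) \<in> G" using end_in[OF G _ path_nbrL[OF nc]] ne by auto
    have pairs: "es ! i \<in> G \<or> es ! Suc i \<in> G" if "Suc i < ?m" for i
      using pair_hit[OF finE dE sub G, of "es ! i" "es ! Suc i"] that neq[of i "Suc i"] zz_step[OF zz that] by auto
    show "G \<in> {G. G \<subseteq> set es \<and> ?Q (map (\<lambda>e. e \<in> G) es)}"
      using GZ e0 eL pairs ne unfolding nff_iff by auto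
  next
    fix G assume G: "G \<in> {G. G \<subseteq> set es \<and> ?Q (map (\<lambda>e. e \<in> G) es)}"
    then have GZ: "G \<subseteq> set es" and e0: "es ! 0 \<in> G" and eL: "es ! (?m - 1) \<in> G"
      and pairs: "\<And>i. Suc i < ?m \<Longrightarrow> es ! i \<in> G \<or> es ! Suc i \<in> G"
      using ne unfolding nff_iff by auto
    show "G \<in> cov (set es)" unfolding cov_iff
    proof (rule conjI[OF GZ], intro ballI)
      fix e assume "e \<in> set es"
      then obtain i where i: "i < ?m" "es ! i = e" by (metis in_set_conv_nth)
      show "(\<exists>g\<in>G. fst g = fst e) \<and> (\<exists>g\<in>G. snd g = snd e)"
      proof (cases "e \<in> G")
        case True then show ?thesis by blast
      next
        case False
        then have ii: "0 < i" "Suc i < ?m" using i e0 eL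
          by (metis gr0I, metis Suc_lessI diff_Suc_1)
        have inG: "es ! (i - 1) \<in> G" "es ! Suc i \<in> G"
          using pairs[of "i - 1"] pairs[of i] ii False i by auto
        from interior[OF zz sub finE dE ii] show ?thesis using inG i by auto
      qed
    qed
  qed
  have "card (cov (set es)) = card {bs. length bs = ?m \<and> ?Q bs}"
    unfolding eq by (rule card_bool_map[OF dist])
  also have "{bs. length bs = ?m \<and> ?Q bs} = PP ?m" unfolding PP_def by auto
  finally have c: "card (cov (set es)) = card (PP ?m)" .
  define n where "n = ?m - 1"
  have eq: "?m = Suc n" using ne unfolding n_def by simp
  have "card (PP (Suc n)) = fib (Suc n)" by (rule PP_card)
  then have "card (PP ?m) = fib ?m" by (simp only: eq[symmetric])
  then show ?thesis using c by (simp only:)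
qed

lemma cyc_shr:
  assumes c: "cycl es" and i: "i < length es"
  shows "shr (es ! i) (es ! (Suc i mod length es))"
proof (cases "Suc i < length es")
  case True then show ?thesis using zz_step[OF zz True] by simp
next
  case False
  then have "Suc i = length es" using i by auto
  then have "i = length es - 1" "Suc i mod length es = 0" by auto
  then show ?thesis using c unfolding cycl_def by (simp add: shr_sym)
qed

lemma prev_mod: "i < m \<Longrightarrow> Suc ((i + m - 1) mod m) mod m = i"
proof (cases i)
  case 0
  assume "i < m" then show ?thesis using 0 by (cases m) auto
next
  case (Suc k)
  assume "i < m"
  then have "(i + m - 1) mod m = k" using Suc by simp
  then show ?thesis using Suc \<open>i < m\<close> by simp
qed

lemma mod_facts:
  assumes i: "i < m" and m: "3 \<le> m"
  shows "Suc i mod m \<noteq> i \<and> (i + m - 1) mod m \<noteq> i \<and> (i + m - 1) mod m \<noteq> Suc i mod m"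
proof -
  consider "i = 0" | "Suc i = m" | "0 < i \<and> Suc i < m" using i by linarith
  then show ?thesis
  proof cases
    case 1
    then have "Suc i mod m = 1" "(i + m - 1) mod m = m - 1" using m by auto
    then show ?thesis using 1 m by auto
  next
    case 2
    then have "Suc i mod m = 0" by simp
    moreover have "i + m - 1 = (m - 2) + m" using 2 m by simp
    then have "(i + m - 1) mod m = (m - 2) mod m" by simp
    then have "(i + m - 1) mod m = m - 2" using m by simp
    ultimately show ?thesis using 2 m by auto
  next
    case 3
    have a: "Suc i mod m = Suc i" using 3 by simp
    have b0: "i + m - 1 = (i - 1) + m" using 3 by simp
    have b1: "(i + m - 1) mod m = (i - 1) mod m" using b0 by simp
    have b2: "(i - 1) mod m = i - 1" using 3 by (intro mod_less) linarith
    show ?thesis using a b1 b2 3 by auto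
  qed
qed

lemma cyc_cov:
  assumes c: "cycl es"
  shows "card (cov (set es)) = lucas (length es)"
proof -
  let ?m = "length es"
  have m3: "3 \<le> ?m" using c unfolding cycl_def by simp
  let ?Q = "\<lambda>bs. \<forall>i<?m. bs ! i \<or> bs ! ((i + 1) mod ?m)"
  have eq: "cov (set es) = {G. G \<subseteq> set es \<and> ?Q (map (\<lambda>e. e \<in> G) es)}"
  proof (intro set_eqI iffI)
    fix G assume G: "G \<in> cov (set es)"
    have GZ: "G \<subseteq> set es" using G unfolding cov_iff by blast
    have pairs: "es ! i \<in> G \<or> es ! (Suc i mod ?m) \<in> G" if "i < ?m" for i
    proof -
      have "Suc i mod ?m < ?m" using ne by simp
      moreover have "Suc i mod ?m \<noteq> i" using that m3
        by (metis Suc_lessI less_irrefl mod_less mod_self not_less_eq_eq numeral_3_eq_3 zero_less_Suc le_trans le_SucI Suc_leD)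
      ultimately show ?thesis
        using pair_hit[OF finE dE sub G, of "es ! i" "es ! (Suc i mod ?m)"] that neq cyc_shr[OF c that] by auto
    qed
    have "?Q (map (\<lambda>e. e \<in> G) es)"
    proof (intro allI impI)
      fix i assume i: "i < ?m"
      then have "Suc i mod ?m < ?m" using ne by simp
      then show "map (\<lambda>e. e \<in> G) es ! i \<or> map (\<lambda>e. e \<in> G) es ! ((i + 1) mod ?m)"
        using pairs[OF i] i by simp
    qed
    then show "G \<in> {G. G \<subseteq> set es \<and> ?Q (map (\<lambda>e. e \<in> G) es)}"
      using GZ by simp
  next
    fix G assume G: "G \<in> {G. G \<subseteq> set es \<and> ?Q (map (\<lambda>e. e \<in> G) es)}"
    then have GZ: "G \<subseteq> set es" and Q: "?Q (map (\<lambda>e. e \<in> G) es)" by auto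
    have pairs: "es ! i \<in> G \<or> es ! (Suc i mod ?m) \<in> G" if i: "i < ?m" for i
    proof -
      have "Suc i mod ?m < ?m" using ne by simp
      then show ?thesis using Q[rule_format, OF i] i by simp
    qed
    show "G \<in> cov (set es)" unfolding cov_iff
    proof (rule conjI[OF GZ], intro ballI)
      fix e assume "e \<in> set es"
      then obtain i where i: "i < ?m" "es ! i = e" by (metis in_set_conv_nth)
      show "(\<exists>g\<in>G. fst g = fst e) \<and> (\<exists>g\<in>G. snd g = snd e)"
      proof (cases "e \<in> G")
        case True then show ?thesis by blast
      next
        case False
        let ?p = "(i + ?m - 1) mod ?m" and ?n = "Suc i mod ?m"
        have pn: "?p < ?m" "?n < ?m" "Suc ?p mod ?m = i" using i prev_mod ne by auto
        have d: "?p \<noteq> i" "?n \<noteq> i" "?p \<noteq> ?n" using mod_facts[OF i(1) m3] by auto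
        have inG: "es ! ?n \<in> G" "es ! ?p \<in> G"
          using pairs[OF i(1)] pairs[OF pn(1)] pn(3) False i by auto
        have s1: "shr (es ! i) (es ! ?n)" using cyc_shr[OF c i(1)] .
        have s2: "shr (es ! i) (es ! ?p)" using cyc_shr[OF c pn(1)] pn(3) shr_sym by metis
        have n: "es ! i \<noteq> es ! ?n" "es ! i \<noteq> es ! ?p" "es ! ?n \<noteq> es ! ?p"
          using neq d pn i by auto
        from two_nbrs[OF finE dE mem[OF i(1)] mem[OF pn(2)] mem[OF pn(1)] n s1 s2]
        show ?thesis using inG i by auto
      qed
    qed
  qed
  have "card (cov (set es)) = card {bs. length bs = ?m \<and> ?Q bs}"
    unfolding eq by (rule card_bool_map[OF dist])
  also have "{bs. length bs = ?m \<and> ?Q bs} = CC ?m" unfolding CC_def by auto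
  finally have c: "card (cov (set es)) = card (CC ?m)" .
  define n where "n = ?m - 2"
  have eq: "?m = Suc (Suc n)" using m3 unfolding n_def by simp
  have "card (CC (Suc (Suc n))) = lucas (Suc (Suc n))" by (rule CC_card)
  then have "card (CC ?m) = lucas ?m" by (simp only: eq[symmetric])
  then show ?thesis using c by (simp only:)
qed

end



lemma odd_set: "even (m::nat) \<Longrightarrow> {i. i < m \<and> odd i} = (\<lambda>k. 2 * k + 1) ` {..<m div 2}"
proof (intro set_eqI iffI)
  fix i assume "even m" "i \<in> {i. i < m \<and> odd i}"
  then have "i = 2 * (i div 2) + 1" "i div 2 < m div 2" by auto
  then show "i \<in> (\<lambda>k. 2 * k + 1) ` {..<m div 2}" by blast
next
  fix i assume "even m" "i \<in> (\<lambda>k. 2 * k + 1) ` {..<m div 2}"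
  then show "i \<in> {i. i < m \<and> odd i}" by auto
qed

lemma odd_card: "even (m::nat) \<Longrightarrow> card {i. i < m \<and> odd i} = m div 2"
  by (simp add: odd_set card_image inj_on_def)

lemma crown_nbrs:
  assumes cr: "crown E Z" and e: "e \<in> Z"
  shows "(\<exists>f\<in>Z. f \<noteq> e \<and> fst f = fst e) \<and> (\<exists>g\<in>Z. g \<noteq> e \<and> snd g = snd e)"
proof -
  let ?m = "card Z"
  obtain vs where ev: "even ?m" and m4: "4 \<le> ?m" and lv: "length vs = ?m"
    and Z: "Z = {(vs ! i, vs ! (i - 1)) | i. i < ?m \<and> odd i} \<union> {(vs ! i, vs ! ((i + 1) mod ?m)) | i. i < ?m \<and> odd i}"
  proof -
    have "even ?m \<and> 4 \<le> ?m \<and> (\<exists>vs. length vs = ?m \<and> Z = {(vs ! i, vs ! (i - 1)) | i. i < ?m \<and> odd i} \<union> {(vs ! i, vs ! ((i + 1) mod ?m)) | i. i < ?m \<and> odd i})"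
      using cr unfolding crown_def by (rule conjunct2)
    then show ?thesis
      apply -
      apply (elim conjE exE)
      apply (rule that)
         apply assumption+
      done
  qed
  define a where "a i = (vs ! i, vs ! (i - 1))" for i
  define b where "b i = (vs ! i, vs ! ((i + 1) mod ?m))" for i
  define Od where "Od = {i. i < ?m \<and> odd i}"
  have A': "{(vs ! i, vs ! (i - 1)) | i. i < ?m \<and> odd i} = a ` Od" unfolding a_def Od_def by blast
  have B': "{(vs ! i, vs ! ((i + 1) mod ?m)) | i. i < ?m \<and> odd i} = b ` Od" unfolding b_def Od_def by blast
  have Z': "Z = a ` Od \<union> b ` Od"
  proof -
    note Z
    also have "{(vs ! i, vs ! (i - 1)) | i. i < ?m \<and> odd i} \<union> {(vs ! i, vs ! ((i + 1) mod ?m)) | i. i < ?m \<and> odd i} = a ` Od \<union> b ` Od"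
      using A' B' by (rule arg_cong2[where f="(\<union>)"])
    finally show ?thesis .
  qed
  have fZ: "finite Z" using m4 card_ge_0_finite by force
  have fO: "finite Od" unfolding Od_def by simp
  have cO: "card Od = ?m div 2" unfolding Od_def using odd_card[OF ev] .
  have cA: "card (a ` Od) \<le> ?m div 2" using card_image_le[OF fO, of a] cO by simp
  have cB: "card (b ` Od) \<le> ?m div 2" using card_image_le[OF fO, of b] cO by simp
  have "card (a ` Od) + card (b ` Od) = card Z + card (a ` Od \<inter> b ` Od)"
    unfolding Z' using card_Un_Int[of "a ` Od" "b ` Od"] fO by simp
  then have "card (a ` Od \<inter> b ` Od) = 0" using cA cB ev by simp
  then have disj: "a ` Od \<inter> b ` Od = {}" using fO by simp
  have mpos: "0 < ?m" using m4 by simp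
  from e Z' consider "e \<in> a ` Od" | "e \<in> b ` Od" by blast
  then show ?thesis
  proof cases
    case 1
    then obtain i where i: "i \<in> Od" "e = a i" by blast
    have io: "i < ?m" "odd i" using i(1) unfolding Od_def by auto
    have bB: "b i \<in> b ` Od" using i(1) by blast
    have eA: "e \<in> a ` Od" using i by blast
    have f: "b i \<in> Z" "b i \<noteq> e" "fst (b i) = fst e"
    proof -
      show "b i \<in> Z" using Z' bB by blast
      show "b i \<noteq> e" using disj bB eA by blast
      show "fst (b i) = fst e" using i(2) unfolding a_def b_def by simp
    qed
    define j where "j = (if i = 1 then ?m - 1 else i - 2)"
    have j: "j \<in> Od" unfolding j_def Od_def using io ev m4
      by (auto; presburger)
    have jj: "(j + 1) mod ?m = i - 1"
    proof (cases "i = 1")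
      case True then show ?thesis unfolding j_def using mpos by simp
    next
      case False
      then have "i \<ge> 3" using io by presburger
      then show ?thesis unfolding j_def using False io by simp
    qed
    have bjB: "b j \<in> b ` Od" using j by blast
    have g: "b j \<in> Z" "b j \<noteq> e" "snd (b j) = snd e"
    proof -
      show "b j \<in> Z" using Z' bjB by blast
      show "b j \<noteq> e" using disj bjB eA by blast
      show "snd (b j) = snd e" using i(2) jj unfolding a_def b_def by simp
    qed
    show ?thesis using f g by blast
  next
    case 2
    then obtain i where i: "i \<in> Od" "e = b i" by blast
    have io: "i < ?m" "odd i" using i(1) unfolding Od_def by auto
    have aA: "a i \<in> a ` Od" using i(1) by blast
    have eB: "e \<in> b ` Od" using i by blast
    have f: "a i \<in> Z" "a i \<noteq> e" "fst (a i) = fst e"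
    proof -
      show "a i \<in> Z" using Z' aA by blast
      show "a i \<noteq> e" using disj aA eB by blast
      show "fst (a i) = fst e" using i(2) unfolding a_def b_def by simp
    qed
    define j where "j = (i + 2) mod ?m"
    have jj: "j \<in> Od" "j - 1 = (i + 1) mod ?m"
    proof -
      have "j \<in> Od \<and> j - 1 = (i + 1) mod ?m"
      proof (cases "i + 2 < ?m")
        case True
        then show ?thesis unfolding j_def Od_def using io by simp
      next
        case False
        then have "i = ?m - 1" using io ev by presburger
        then have i2: "i + 2 = 1 + ?m" "i + 1 = ?m" using m4 by auto
        have "j = 1" unfolding j_def using i2(1) m4 by (simp add: mod_Suc)
        moreover have "(i + 1) mod ?m = 0" using i2(2) by simp
        ultimately have "j = 1" "(i + 1) mod ?m = 0" by auto
        then show ?thesis unfolding Od_def using m4 by simp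
      qed
      then show "j \<in> Od" "j - 1 = (i + 1) mod ?m" by auto
    qed
    have ajA: "a j \<in> a ` Od" using jj(1) by blast
    have g: "a j \<in> Z" "a j \<noteq> e" "snd (a j) = snd e"
    proof -
      show "a j \<in> Z" using Z' ajA by blast
      show "a j \<noteq> e" using disj ajA eB by blast
      show "snd (a j) = snd e" using i(2) jj(2) unfolding a_def b_def by simp
    qed
    show ?thesis using f g by blast
  qed
qed

lemma crown_of_fun:
  fixes c :: "nat \<Rightarrow> 'a \<times> 'a"
  assumes ev: "even m" and m4: "4 \<le> m" and Z: "Z = c ` {..<m}"
    and h1: "\<And>i. i < m \<Longrightarrow> even i \<Longrightarrow> fst (c i) = fst (c (Suc i mod m))"
    and h2: "\<And>i. i < m \<Longrightarrow> odd i \<Longrightarrow> snd (c i) = snd (c (Suc i mod m))"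
  shows "\<exists>vs. length vs = m \<and>
     Z = {(vs ! i, vs ! (i - 1)) | i. i < m \<and> odd i} \<union> {(vs ! i, vs ! ((i + 1) mod m)) | i. i < m \<and> odd i}"
proof -
  define vs where "vs = map (\<lambda>i. if even i then snd (c i) else fst (c i)) [0..<m]"
  have lv: "length vs = m" unfolding vs_def by simp
  have vsn: "vs ! i = (if even i then snd (c i) else fst (c i))" if "i < m" for i
    unfolding vs_def using that by simp
  have A: "(vs ! i, vs ! (i - 1)) = c (i - 1)" if "i < m" "odd i" for i
  proof -
    have "i - 1 < m" using that by simp
    have "even (i - 1)" using that by presburger
    have "Suc (i - 1) = i" using that by (cases i) auto
    then have "fst (c (i - 1)) = fst (c i)" using h1[of "i - 1"] that by simp
    then show ?thesis using vsn[of i] vsn[of "i - 1"] that \<open>i - 1 < m\<close> \<open>even (i - 1)\<close>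
      by (simp add: prod_eq_iff)
  qed
  have B: "(vs ! i, vs ! ((i + 1) mod m)) = c i" if "i < m" "odd i" for i
  proof -
    have "(i + 1) mod m < m" using m4 by simp
    moreover have "even ((i + 1) mod m)"
    proof (cases "i + 1 < m")
      case True then show ?thesis using that by simp
    next
      case False
      then have "i + 1 = m" using that by simp
      then show ?thesis by simp
    qed
    ultimately show ?thesis using vsn[of i] vsn[of "(i + 1) mod m"] that h2[of i]
      by (simp add: prod_eq_iff)
  qed
  have "Z = {(vs ! i, vs ! (i - 1)) | i. i < m \<and> odd i} \<union> {(vs ! i, vs ! ((i + 1) mod m)) | i. i < m \<and> odd i}"
  proof
    show "{(vs ! i, vs ! (i - 1)) | i. i < m \<and> odd i} \<union> {(vs ! i, vs ! ((i + 1) mod m)) | i. i < m \<and> odd i} \<subseteq> Z"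
    proof
      fix z assume "z \<in> {(vs ! i, vs ! (i - 1)) | i. i < m \<and> odd i} \<union> {(vs ! i, vs ! ((i + 1) mod m)) | i. i < m \<and> odd i}"
      then consider i where "i < m" "odd i" "z = (vs ! i, vs ! (i - 1))"
        | i where "i < m" "odd i" "z = (vs ! i, vs ! ((i + 1) mod m))" by blast
      then show "z \<in> Z"
      proof cases
        case 1 then show ?thesis using A[of i] Z by auto
      next
        case 2 then show ?thesis using B[of i] Z by auto
      qed
    qed
  next
    show "Z \<subseteq> {(vs ! i, vs ! (i - 1)) | i. i < m \<and> odd i} \<union> {(vs ! i, vs ! ((i + 1) mod m)) | i. i < m \<and> odd i}"
    proof
      fix z assume "z \<in> Z"
      then obtain j where j: "j < m" "z = c j" using Z by auto
      show "z \<in> {(vs ! i, vs ! (i - 1)) | i. i < m \<and> odd i} \<union> {(vs ! i, vs ! ((i + 1) mod m)) | i. i < m \<and> odd i}"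
      proof (cases "odd j")
        case True
        then have "z = (vs ! j, vs ! ((j + 1) mod m))" using B[of j] j by simp
        then show ?thesis using j True by blast
      next
        case False
        then have "odd (Suc j)" by simp
        have "Suc j < m" using j ev False by presburger
        then have "z = (vs ! Suc j, vs ! (Suc j - 1))" using A[of "Suc j"] j False by simp
        then show ?thesis using \<open>Suc j < m\<close> \<open>odd (Suc j)\<close> by blast
      qed
    qed
  qed
  then show ?thesis using lv by blast
qed

lemma next_prev: "i < m \<Longrightarrow> (Suc i mod m + m - 1) mod m = i"
proof (cases "Suc i < m")
  case True
  assume "i < m"
  have "Suc i mod m + m - 1 = i + m" using True by simp
  then show ?thesis using \<open>i < m\<close> by simp
next
  case False
  assume "i < m"
  then have "Suc i = m" using False by simp
  then show ?thesis by simp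
qed

context comp
begin

lemma cycl_crown:
  assumes mx: "maximal_zigzag_trail E (set es)" and c: "cycl es"
  shows "crown E (set es)"
proof -
  let ?m = "length es"
  have m3: "3 \<le> ?m" using c unfolding cycl_def by simp
  have cZ: "card (set es) = ?m" using distinct_card[OF dist] .
  define sf where "sf i \<longleftrightarrow> fst (es ! i) = fst (es ! (Suc i mod ?m))" for i
  have alt: "sf (Suc i mod ?m) \<longleftrightarrow> \<not> sf i" if i: "i < ?m" for i
  proof -
    define j where "j = Suc i mod ?m"
    define k where "k = Suc j mod ?m"
    have jk: "j < ?m" "k < ?m" unfolding j_def k_def using ne by auto
    note mf1 = mod_facts[OF i m3] and mf2 = mod_facts[OF jk(1) m3]
    have pj: "(j + ?m - 1) mod ?m = i" unfolding j_def using next_prev[OF i] .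
    have d: "j \<noteq> i" "k \<noteq> j" "k \<noteq> i" using mf1 mf2 pj unfolding j_def k_def by auto
    have n: "es ! j \<noteq> es ! i" "es ! j \<noteq> es ! k" "es ! i \<noteq> es ! k" using neq d i jk by auto
    have s1: "shr (es ! j) (es ! i)" using cyc_shr[OF c i] shr_sym unfolding j_def by metis
    have s2: "shr (es ! j) (es ! k)" using cyc_shr[OF c jk(1)] unfolding k_def .
    from two_nbrs[OF finE dE mem[OF jk(1)] mem[OF i] mem[OF jk(2)] n s1 s2]
    have "(fst (es ! i) = fst (es ! j) \<and> snd (es ! k) = snd (es ! j)) \<or>
          (snd (es ! i) = snd (es ! j) \<and> fst (es ! k) = fst (es ! j))" .
    moreover have "\<not> (fst (es ! i) = fst (es ! j) \<and> snd (es ! i) = snd (es ! j))"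
    proof
      assume "fst (es ! i) = fst (es ! j) \<and> snd (es ! i) = snd (es ! j)"
      then have "es ! i = es ! j" by (simp add: prod_eq_iff)
      then show False using n by simp
    qed
    moreover have "\<not> (fst (es ! k) = fst (es ! j) \<and> snd (es ! k) = snd (es ! j))"
    proof
      assume "fst (es ! k) = fst (es ! j) \<and> snd (es ! k) = snd (es ! j)"
      then have "es ! k = es ! j" by (simp add: prod_eq_iff)
      then show False using n by simp
    qed
    ultimately have "fst (es ! j) = fst (es ! k) \<longleftrightarrow> \<not> (fst (es ! i) = fst (es ! j))" by auto
    then show ?thesis unfolding sf_def j_def k_def by simp
  qed
  have par: "sf i \<longleftrightarrow> (sf 0 \<longleftrightarrow> even i)" if "i < ?m" for i
    using that
  proof (induction i)
    case 0 then show ?case by simp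
  next
    case (Suc i)
    have "sf (Suc i mod ?m) \<longleftrightarrow> \<not> sf i" using alt[of i] Suc.prems by simp
    moreover have "Suc i mod ?m = Suc i" using Suc.prems by simp
    ultimately have "sf (Suc i) \<longleftrightarrow> \<not> sf i" by simp
    then show ?case using Suc.IH Suc.prems by simp
  qed
  have em: "even ?m"
  proof (rule ccontr)
    assume "odd ?m"
    then have e1: "even (?m - 1)" using m3 by presburger
    have "sf (Suc (?m - 1) mod ?m) \<longleftrightarrow> \<not> sf (?m - 1)" using alt[of "?m - 1"] m3 by simp
    moreover have "Suc (?m - 1) = ?m" using m3 by simp
    then have "Suc (?m - 1) mod ?m = 0" by simp
    ultimately show False using par[of "?m - 1"] e1 m3 by simp
  qed
  have m4: "4 \<le> ?m" using m3 em by presburger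
  obtain cf :: "nat \<Rightarrow> 'a \<times> 'a" where cimg: "cf ` {..<?m} = set es"
    and cfst: "\<And>i. i < ?m \<Longrightarrow> fst (cf i) = fst (cf (Suc i mod ?m)) \<longleftrightarrow> even i"
    and cshr: "\<And>i. i < ?m \<Longrightarrow> shr (cf i) (cf (Suc i mod ?m))"
  proof (cases "sf 0")
    case True
    show ?thesis
    proof (rule that[of "\<lambda>i. es ! i"])
      show "(\<lambda>i. es ! i) ` {..<?m} = set es" unfolding set_conv_nth by auto
      fix i assume i: "i < ?m"
      show "fst (es ! i) = fst (es ! (Suc i mod ?m)) \<longleftrightarrow> even i" using par[OF i] True unfolding sf_def by simp
      show "shr (es ! i) (es ! (Suc i mod ?m))" using cyc_shr[OF c i] .
    qed
  next
    case False
    show ?thesis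
    proof (rule that[of "\<lambda>i. es ! (Suc i mod ?m)"])
      show "(\<lambda>i. es ! (Suc i mod ?m)) ` {..<?m} = set es"
      proof
        show "(\<lambda>i. es ! (Suc i mod ?m)) ` {..<?m} \<subseteq> set es" using ne by auto
        show "set es \<subseteq> (\<lambda>i. es ! (Suc i mod ?m)) ` {..<?m}"
        proof
          fix x assume "x \<in> set es"
          then obtain k where k: "k < ?m" "x = es ! k" by (metis in_set_conv_nth)
          have "Suc ((k + ?m - 1) mod ?m) mod ?m = k" using prev_mod[OF k(1)] .
          moreover have "(k + ?m - 1) mod ?m < ?m" using ne by simp
          ultimately show "x \<in> (\<lambda>i. es ! (Suc i mod ?m)) ` {..<?m}" using k
            by (metis (no_types, lifting) image_eqI lessThan_iff)
        qed
      qed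
      fix i assume i: "i < ?m"
      have i': "Suc i mod ?m < ?m" using ne by simp
      show "fst (es ! (Suc i mod ?m)) = fst (es ! (Suc (Suc i mod ?m) mod ?m)) \<longleftrightarrow> even i"
        using alt[OF i] par[OF i] False unfolding sf_def by simp
      show "shr (es ! (Suc i mod ?m)) (es ! (Suc (Suc i mod ?m) mod ?m))" using cyc_shr[OF c i'] .
    qed
  qed
  have "\<exists>vs. length vs = ?m \<and>
     set es = {(vs ! i, vs ! (i - 1)) | i. i < ?m \<and> odd i} \<union> {(vs ! i, vs ! ((i + 1) mod ?m)) | i. i < ?m \<and> odd i}"
  proof (rule crown_of_fun[OF em m4 cimg[symmetric]])
    fix i assume "i < ?m" "even i" then show "fst (cf i) = fst (cf (Suc i mod ?m))" using cfst by simp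
  next
    fix i assume i: "i < ?m" "odd i"
    then have "fst (cf i) \<noteq> fst (cf (Suc i mod ?m))" using cfst by simp
    then show "snd (cf i) = snd (cf (Suc i mod ?m))" using cshr[OF i(1)] unfolding shr_def by simp
  qed
  then show ?thesis unfolding crown_def using mx cZ em m4 by simp
qed

end

lemma comp_count:
  assumes finE: "finite E" and dE: "dbd E" and mx: "maximal_zigzag_trail E Z"
  shows "card (cov Z) = (if crown E Z then lucas (card Z) else fib (card Z))"
proof -
  obtain es where es: "set es = Z" "zigzag_order es" "Z \<subseteq> E"
    using mx unfolding maximal_zigzag_trail_def zigzag_trail_def by auto
  interpret comp E es using finE dE es by unfold_locales auto
  have cZ: "card Z = length es" using distinct_card[OF dist] es(1) by simp
  show ?thesis
  proof (cases "cycl es")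
    case True
    have "crown E Z" using cycl_crown[OF _ True] mx es(1) by simp
    then show ?thesis using cyc_cov[OF True] es(1) cZ by simp
  next
    case False
    have "\<not> crown E Z"
    proof
      assume cr: "crown E Z"
      have e0: "es ! 0 \<in> Z" using ne es(1) by auto
      obtain f g where f: "f \<in> Z" "f \<noteq> es ! 0" "fst f = fst (es ! 0)"
        and g: "g \<in> Z" "g \<noteq> es ! 0" "snd g = snd (es ! 0)"
        using crown_nbrs[OF cr e0] by blast
      have "f = es ! 1" using path_nbr0[OF False, of f] f es(1) unfolding shr_def by auto
      moreover have "g = es ! 1" using path_nbr0[OF False, of g] g es(1) unfolding shr_def by auto
      ultimately have "f = es ! 0" using f g by (simp add: prod_eq_iff)
      then show False using f by simp
    qed
    then show ?thesis using path_cov[OF False] es(1) cZ by simp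
  qed
qed



lemma trail_ne: "zigzag_trail E Z \<Longrightarrow> Z \<noteq> {}"
  unfolding zigzag_trail_def zigzag_order_def by auto

lemma trail_sub: "zigzag_trail E Z \<Longrightarrow> Z \<subseteq> E"
  unfolding zigzag_trail_def by auto

lemma mtr_finite: "finite E \<Longrightarrow> finite {Z. maximal_zigzag_trail E Z}"
  by (rule finite_subset[of _ "Pow E"]) (auto simp: maximal_zigzag_trail_def zigzag_trail_def)

lemma sub_finite: "finite E \<Longrightarrow> finite {Z. maximal_zigzag_trail E Z \<and> P Z}"
  by (rule finite_subset[of _ "Pow E"]) (auto simp: maximal_zigzag_trail_def zigzag_trail_def)

lemma exists_max:
  assumes "finite E" "e \<in> E"
  shows "\<exists>Z. maximal_zigzag_trail E Z"
proof -
  let ?T = "{Z. zigzag_trail E Z}"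
  have "{e} \<in> ?T" unfolding zigzag_trail_def zigzag_order_def using assms(2)
    by (intro CollectI conjI exI[of _ "[e]"]) auto
  moreover have "finite ?T" by (rule finite_subset[of _ "Pow E"]) (use assms(1) in \<open>auto simp: zigzag_trail_def\<close>)
  ultimately obtain Z where Z: "Z \<in> ?T" "\<forall>W\<in>?T. Z \<subseteq> W \<longrightarrow> Z = W"
    using finite_has_maximal[of ?T] by blast
  then have "maximal_zigzag_trail E Z" unfolding maximal_zigzag_trail_def by blast
  then show ?thesis by blast
qed

lemma trail_meets:
  assumes finE: "finite E" and dE: "dbd E" and mx: "maximal_zigzag_trail E Z"
    and W: "zigzag_trail E W" and m: "W \<inter> Z \<noteq> {}"
  shows "W \<subseteq> Z"
proof -
  obtain es where es: "set es = W" "zigzag_order es" "W \<subseteq> E" using W unfolding zigzag_trail_def by auto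
  have "set es \<subseteq> Z"
  proof (rule trail_in_closed[OF es(2)])
    show "\<forall>e\<in>Z. \<forall>f\<in>set es. shr e f \<longrightarrow> f \<in> Z" using closure[OF mx finE dE] es by blast
    show "set es \<inter> Z \<noteq> {}" using m es by simp
  qed
  then show ?thesis using es by simp
qed

lemma reduce:
  assumes finE: "finite E" and dE: "dbd E" and mx: "maximal_zigzag_trail E Z"
  shows "maximal_zigzag_trail (E - Z) W \<longleftrightarrow> maximal_zigzag_trail E W \<and> W \<noteq> Z"
proof
  have Zne: "Z \<noteq> {}" using mx trail_ne unfolding maximal_zigzag_trail_def by blast
  assume M: "maximal_zigzag_trail (E - Z) W"
  have tW: "zigzag_trail E W" "W \<subseteq> E - Z" "W \<noteq> {}"
    using M trail_ne unfolding maximal_zigzag_trail_def zigzag_trail_def by blast+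
  have "W \<noteq> Z" using tW Zne by blast
  moreover have "maximal_zigzag_trail E W" unfolding maximal_zigzag_trail_def
  proof (intro conjI notI)
    show "zigzag_trail E W" by (rule tW(1))
    assume "\<exists>W'. zigzag_trail E W' \<and> W \<subset> W'"
    then obtain W' where W': "zigzag_trail E W'" "W \<subset> W'" by blast
    show False
    proof (cases "W' \<inter> Z = {}")
      case True
      then have "zigzag_trail (E - Z) W'" using W' unfolding zigzag_trail_def by blast
      then show False using M W'(2) unfolding maximal_zigzag_trail_def by blast
    next
      case False
      then have "W' \<subseteq> Z" using trail_meets[OF finE dE mx W'(1)] by blast
      then show False using W'(2) tW by blast
    qed
  qed
  ultimately show "maximal_zigzag_trail E W \<and> W \<noteq> Z" by blast
next
  assume A: "maximal_zigzag_trail E W \<and> W \<noteq> Z"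
  have tZ: "zigzag_trail E Z" using mx unfolding maximal_zigzag_trail_def by blast
  have tW: "zigzag_trail E W" using A unfolding maximal_zigzag_trail_def by blast
  have disj: "W \<inter> Z = {}"
  proof (rule ccontr)
    assume n: "W \<inter> Z \<noteq> {}"
    have "W \<subseteq> Z" using trail_meets[OF finE dE mx tW n] .
    moreover have "Z \<subseteq> W" using trail_meets[OF finE dE _ tZ] A n by blast
    ultimately show False using A by blast
  qed
  show "maximal_zigzag_trail (E - Z) W" unfolding maximal_zigzag_trail_def
  proof (intro conjI notI)
    show "zigzag_trail (E - Z) W" using tW disj unfolding zigzag_trail_def by blast
    assume "\<exists>W'. zigzag_trail (E - Z) W' \<and> W \<subset> W'"
    then obtain W' where W': "zigzag_trail (E - Z) W'" "W \<subset> W'" by blast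
    then have "zigzag_trail E W'" unfolding zigzag_trail_def by blast
    then show False using A W'(2) unfolding maximal_zigzag_trail_def by blast
  qed
qed

lemma cov_split:
  assumes cl: "\<forall>e\<in>Z. \<forall>f\<in>E. shr e f \<longrightarrow> f \<in> Z" and ZE: "Z \<subseteq> E"
  shows "card (cov E) = card (cov Z) * card (cov (E - Z))"
proof -
  let ?f = "\<lambda>G. (G \<inter> Z, G - Z)" and ?g = "\<lambda>(A, B). A \<union> B"
  have "bij_betw ?f (cov E) (cov Z \<times> cov (E - Z))"
  proof (rule bij_betw_byWitness[where f' = ?g])
    show "\<forall>a\<in>cov E. ?g (?f a) = a" by auto
    show "\<forall>a'\<in>cov Z \<times> cov (E - Z). ?f (?g a') = a'" by (auto simp: cov_def)
    show "?f ` cov E \<subseteq> cov Z \<times> cov (E - Z)"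
    proof
      fix p assume "p \<in> ?f ` cov E"
      then obtain G where G: "G \<in> cov E" "p = ?f G" by blast
      have GE: "G \<subseteq> E" and W: "\<And>e. e \<in> E \<Longrightarrow> (\<exists>g\<in>G. fst g = fst e) \<and> (\<exists>g\<in>G. snd g = snd e)"
        using G(1) unfolding cov_iff by auto
      have "G \<inter> Z \<in> cov Z" unfolding cov_iff
      proof (intro conjI ballI)
        show "G \<inter> Z \<subseteq> Z" by blast
        fix e assume e: "e \<in> Z"
        then have eE: "e \<in> E" using ZE by blast
        obtain g1 where g1: "g1 \<in> G" "fst g1 = fst e" using W[OF eE] by blast
        obtain g2 where g2: "g2 \<in> G" "snd g2 = snd e" using W[OF eE] by blast
        have "g1 \<in> Z" by (rule cl[rule_format, OF e]) (use g1 GE in \<open>auto simp: shr_def\<close>)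
        moreover have "g2 \<in> Z" by (rule cl[rule_format, OF e]) (use g2 GE in \<open>auto simp: shr_def\<close>)
        ultimately have "g1 \<in> Z" "g2 \<in> Z" by auto
        then show "\<exists>g\<in>G \<inter> Z. fst g = fst e" "\<exists>g\<in>G \<inter> Z. snd g = snd e" using g1 g2 by auto
      qed
      moreover have "G - Z \<in> cov (E - Z)" unfolding cov_iff
      proof (intro conjI ballI)
        show "G - Z \<subseteq> E - Z" using GE by blast
        fix e assume e: "e \<in> E - Z"
        obtain g1 where g1: "g1 \<in> G" "fst g1 = fst e" using W e by blast
        obtain g2 where g2: "g2 \<in> G" "snd g2 = snd e" using W e by blast
        have "g1 \<notin> Z"
        proof
          assume "g1 \<in> Z"
          have "e \<in> Z" by (rule cl[rule_format, OF \<open>g1 \<in> Z\<close>]) (use e g1 in \<open>auto simp: shr_def\<close>)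
          then show False using e by blast
        qed
        moreover have "g2 \<notin> Z"
        proof
          assume "g2 \<in> Z"
          have "e \<in> Z" by (rule cl[rule_format, OF \<open>g2 \<in> Z\<close>]) (use e g2 in \<open>auto simp: shr_def\<close>)
          then show False using e by blast
        qed
        ultimately have "g1 \<notin> Z" "g2 \<notin> Z" by auto
        then show "\<exists>g\<in>G - Z. fst g = fst e" "\<exists>g\<in>G - Z. snd g = snd e" using g1 g2 by auto
      qed
      ultimately show "p \<in> cov Z \<times> cov (E - Z)" using G by simp
    qed
    show "?g ` (cov Z \<times> cov (E - Z)) \<subseteq> cov E"
    proof
      fix G assume "G \<in> ?g ` (cov Z \<times> cov (E - Z))"
      then obtain A B where AB: "A \<in> cov Z" "B \<in> cov (E - Z)" "G = A \<union> B" by auto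
      show "G \<in> cov E" unfolding cov_iff
      proof (intro conjI ballI)
        show "G \<subseteq> E" using AB ZE unfolding cov_iff by auto
        fix e assume e: "e \<in> E"
        show "\<exists>g\<in>G. fst g = fst e"
        proof (cases "e \<in> Z")
          case True then show ?thesis using AB unfolding cov_iff by blast
        next
          case False then show ?thesis using AB e unfolding cov_iff by blast
        qed
        show "\<exists>g\<in>G. snd g = snd e"
        proof (cases "e \<in> Z")
          case True then show ?thesis using AB unfolding cov_iff by blast
        next
          case False then show ?thesis using AB e unfolding cov_iff by blast
        qed
      qed
    qed
  qed
  then have "card (cov E) = card (cov Z \<times> cov (E - Z))" by (rule bij_betw_same_card)
  then show ?thesis by (simp add: card_cartesian_product)
qed

lemma phi_gt1: "golden_ratio > 1"
proof -
  have "sqrt 5 > 1" by simp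
  then show ?thesis unfolding golden_ratio_def by simp
qed

lemma phi_sq: "golden_ratio ^ 2 = golden_ratio + 1"
  unfolding golden_ratio_def by (simp add: power2_eq_square field_simps)

lemma phi_step: "golden_ratio ^ Suc (Suc n) = golden_ratio ^ Suc n + golden_ratio ^ n"
proof -
  have "golden_ratio ^ Suc (Suc n) = golden_ratio ^ n * golden_ratio ^ 2" by (simp add: power_add[symmetric])
  also have "\<dots> = golden_ratio ^ n * golden_ratio + golden_ratio ^ n" by (simp add: phi_sq algebra_simps)
  finally show ?thesis by simp
qed

lemma fib_upper: "real (fib n) \<le> golden_ratio ^ n"
proof (induction n rule: fib.induct)
  case 1 then show ?case by simp
next
  case 2 then show ?case using phi_gt1 by simp
next
  case (3 n) then show ?case using phi_step[of n] by simp
qed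

lemma fib_lower: "golden_ratio ^ Suc n \<le> golden_ratio ^ 2 * real (fib (Suc n))"
proof (induction n rule: fib.induct)
  case 1 then show ?case using phi_gt1 by (simp add: power2_eq_square)
next
  case 2 then show ?case by (simp add: power2_eq_square)
next
  case (3 n)
  have "golden_ratio ^ Suc (Suc (Suc n)) = golden_ratio ^ Suc (Suc n) + golden_ratio ^ Suc n" by (rule phi_step)
  also have "\<dots> \<le> golden_ratio ^ 2 * real (fib (Suc (Suc n))) + golden_ratio ^ 2 * real (fib (Suc n))"
    using 3 by simp
  finally show ?case by (simp add: algebra_simps)
qed

lemma lucas_upper: "real (lucas n) \<le> 2 * golden_ratio ^ n"
proof (induction n rule: lucas.induct)
  case 1 then show ?case by simp
next
  case 2 then show ?case using phi_gt1 by simp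
next
  case (3 n) then show ?case using phi_step[of n] by simp
qed

lemma lucas_lower: "golden_ratio ^ Suc n \<le> golden_ratio ^ 2 * real (lucas (Suc n))"
proof (induction n rule: fib.induct)
  case 1 then show ?case using phi_gt1 by (simp add: power2_eq_square)
next
  case 2
  have "lucas 2 = 3" by (simp add: numeral_eq_Suc)
  then show ?case using phi_gt1 by (simp add: power2_eq_square numeral_eq_Suc)
next
  case (3 n)
  have "golden_ratio ^ Suc (Suc (Suc n)) = golden_ratio ^ Suc (Suc n) + golden_ratio ^ Suc n" by (rule phi_step)
  also have "\<dots> \<le> golden_ratio ^ 2 * real (lucas (Suc (Suc n))) + golden_ratio ^ 2 * real (lucas (Suc n))"
    using 3 by simp
  finally show ?case by (simp add: algebra_simps)
qed

lemma comp_bounds: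
  assumes "1 \<le> m" "a = (if b then lucas m else fib m)"
  shows "golden_ratio ^ m \<le> golden_ratio ^ 2 * real a \<and> real a \<le> 2 * golden_ratio ^ m"
proof -
  obtain n where n: "m = Suc n" using assms(1) by (cases m) auto
  have p: "golden_ratio ^ m \<ge> 0" using phi_gt1 by simp
  show ?thesis using assms(2) fib_lower[of n] lucas_lower[of n] fib_upper[of m] lucas_upper[of m] n p
    by (cases b) auto
qed

definition FL :: "('a \<times> 'a) set \<Rightarrow> nat" where
  "FL E = (\<Prod>Z\<in>{Z. fence E Z}. fib (card Z)) * (\<Prod>Z\<in>{Z. crown E Z}. lucas (card Z))"

lemma main:
  assumes "finite E" "dbd E"
  shows "card (cov E) = FL E \<and>
    golden_ratio ^ card E \<le> golden_ratio ^ (2 * card {Z. maximal_zigzag_trail E Z}) * real (card (cov E)) \<and>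
    real (card (cov E)) \<le> 2 ^ card {Z. maximal_zigzag_trail E Z} * golden_ratio ^ card E"
  using assms
proof (induction "card E" arbitrary: E rule: less_induct)
  case less
  show ?case
  proof (cases "E = {}")
    case True
    have c: "cov E = {{}}" unfolding True cov_def by auto
    have m: "{Z. maximal_zigzag_trail E Z} = {}" "{Z. fence E Z} = {}" "{Z. crown E Z} = {}"
    proof -
      have t0: "\<not> zigzag_trail E W" for W using trail_ne[of E W] trail_sub[of E W] True by blast
      show "{Z. maximal_zigzag_trail E Z} = {}" "{Z. fence E Z} = {}" "{Z. crown E Z} = {}"
        using t0 by (auto simp: fence_def crown_def maximal_zigzag_trail_def)
    qed
    show ?thesis unfolding FL_def c m using True by simp
  next
    case False
    then obtain e where "e \<in> E" by blast
    then obtain Z where mx: "maximal_zigzag_trail E Z" using exists_max less.prems(1) by blast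
    have ZE: "Z \<subseteq> E" and Zne: "Z \<noteq> {}" using mx trail_sub trail_ne unfolding maximal_zigzag_trail_def by blast+
    let ?E' = "E - Z"
    have fE': "finite ?E'" using less.prems(1) by simp
    have dE': "dbd ?E'" using dbd_subset[OF less.prems(1,2)] by blast
    have fZ: "finite Z" using ZE less.prems(1) finite_subset by blast
    have cZ0: "card Z > 0" using fZ Zne by (simp add: card_gt_0_iff)
    have ce: "card E = card Z + card ?E'" using card_Diff_subset[OF fZ ZE] card_mono[OF less.prems(1) ZE] by simp
    have lt: "card ?E' < card E" using ce cZ0 by simp
    note IH = less.hyps[OF lt fE' dE']
    have cl: "\<forall>e\<in>Z. \<forall>f\<in>E. shr e f \<longrightarrow> f \<in> Z" using closure[OF mx less.prems(1,2)] by blast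
    have split: "card (cov E) = card (cov Z) * card (cov ?E')" using cov_split[OF cl ZE] .
    have cc: "card (cov Z) = (if crown E Z then lucas (card Z) else fib (card Z))"
      using comp_count[OF less.prems(1,2) mx] .
    have red: "\<And>W. maximal_zigzag_trail ?E' W \<longleftrightarrow> maximal_zigzag_trail E W \<and> W \<noteq> Z"
      using reduce[OF less.prems(1,2) mx] .
    have mtr: "{W. maximal_zigzag_trail E W} = insert Z {W. maximal_zigzag_trail ?E' W}"
      using red mx by blast
    have Znot: "Z \<notin> {W. maximal_zigzag_trail ?E' W}" using red by blast
    have crE: "crown ?E' W \<longleftrightarrow> crown E W \<and> W \<noteq> Z" for W
    proof (cases "W = Z")
      case True then show ?thesis using red[of W] unfolding crown_def by simp
    next
      case False
      then have "maximal_zigzag_trail ?E' W = maximal_zigzag_trail E W" using red by simp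
      then show ?thesis unfolding crown_def using False by simp
    qed
    have feE: "fence ?E' W \<longleftrightarrow> fence E W \<and> W \<noteq> Z" for W
      unfolding fence_def using crE[of W] red[of W] by blast
    have crs: "{W. crown ?E' W} = {W. crown E W} - {Z}" using crE by blast
    have fcs: "{W. fence ?E' W} = {W. fence E W} - {Z}" using feE by blast
    have fin1: "finite {W. crown E W}" "finite {W. fence E W}"
      by (rule finite_subset[OF _ mtr_finite[OF less.prems(1)]], simp add: crown_def fence_def Collect_mono)+
    have FL: "FL E = card (cov Z) * FL ?E'"
    proof (cases "crown E Z")
      case True
      then have "\<not> fence E Z" unfolding fence_def by simp
      then have f: "{W. fence ?E' W} = {W. fence E W}" using fcs by blast
      have "(\<Prod>W\<in>{W. crown E W}. lucas (card W)) = lucas (card Z) * (\<Prod>W\<in>{W. crown E W} - {Z}. lucas (card W))"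
        by (rule prod.remove[OF fin1(1)]) (use True in simp)
      then have "(\<Prod>W\<in>{W. crown E W}. lucas (card W)) = lucas (card Z) * (\<Prod>W\<in>{W. crown ?E' W}. lucas (card W))"
        unfolding crs .
      then show ?thesis unfolding FL_def f using cc True by simp
    next
      case False
      then have fz: "fence E Z" using mx unfolding fence_def by simp
      have c: "{W. crown ?E' W} = {W. crown E W}" using crs False by blast
      have "(\<Prod>W\<in>{W. fence E W}. fib (card W)) = fib (card Z) * (\<Prod>W\<in>{W. fence E W} - {Z}. fib (card W))"
        by (rule prod.remove[OF fin1(2)]) (use fz in simp)
      then have "(\<Prod>W\<in>{W. fence E W}. fib (card W)) = fib (card Z) * (\<Prod>W\<in>{W. fence ?E' W}. fib (card W))"
        unfolding fcs .
      then show ?thesis unfolding FL_def c using cc False by simp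
    qed
    let ?d = "card {W. maximal_zigzag_trail E W}" and ?d' = "card {W. maximal_zigzag_trail ?E' W}"
    have dd: "?d = Suc ?d'" unfolding mtr using Znot mtr_finite[OF fE'] by simp
    have cZ1: "1 \<le> card Z" using cZ0 by simp
    obtain B1 B2 where B: "golden_ratio ^ card Z \<le> golden_ratio ^ 2 * real (card (cov Z))"
      "real (card (cov Z)) \<le> 2 * golden_ratio ^ card Z"
      using comp_bounds[OF cZ1 cc] by blast
    let ?a = "real (card (cov Z))" and ?c = "real (card (cov ?E'))" and ?p = golden_ratio
    have p0: "?p \<ge> 0" using phi_gt1 by simp
    have IHl: "?p ^ card ?E' \<le> ?p ^ (2 * ?d') * ?c" and IHu: "?c \<le> 2 ^ ?d' * ?p ^ card ?E'"
      using IH by auto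
    have low: "?p ^ card E \<le> ?p ^ (2 * ?d) * real (card (cov E))"
    proof -
      have "?p ^ card E = ?p ^ card Z * ?p ^ card ?E'" unfolding ce by (simp add: power_add)
      also have "\<dots> \<le> (?p ^ 2 * ?a) * (?p ^ (2 * ?d') * ?c)"
        by (rule mult_mono[OF B(1) IHl]) (use p0 in simp_all)
      also have "\<dots> = ?p ^ (2 * ?d) * (?a * ?c)" unfolding dd by (simp add: power_add power2_eq_square algebra_simps)
      finally show ?thesis unfolding split by simp
    qed
    have up: "real (card (cov E)) \<le> 2 ^ ?d * ?p ^ card E"
    proof -
      have "real (card (cov E)) = ?a * ?c" unfolding split by simp
      also have "\<dots> \<le> (2 * ?p ^ card Z) * (2 ^ ?d' * ?p ^ card ?E')"
        by (rule mult_mono[OF B(2) IHu]) (use p0 in simp_all)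
      also have "\<dots> = 2 ^ ?d * ?p ^ card E" unfolding dd ce by (simp add: power_add algebra_simps)
      finally show ?thesis .
    qed
    have "card (cov E) = FL E" using FL split IH by simp
    then show ?thesis using low up by blast
  qed
qed



fun wk :: "('a \<times> 'a) set \<Rightarrow> 'a list \<Rightarrow> bool" where
  "wk R [] = True"
| "wk R [x] = True"
| "wk R (x # y # xs) = ((x, y) \<in> R \<and> wk R (y # xs))"

lemma walk_wk: "walk R xs \<longleftrightarrow> wk R xs"
proof (induction R xs rule: wk.induct)
  case (3 R x y xs)
  show ?case
  proof
    assume "walk R (x # y # xs)"
    then have "(x, y) \<in> R" "walk R (y # xs)" unfolding walk_def
      by auto
    then show "wk R (x # y # xs)" using 3 by simp
  next
    assume "wk R (x # y # xs)"
    then have "(x, y) \<in> R" "walk R (y # xs)" using 3 by auto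
    then show "walk R (x # y # xs)" unfolding walk_def
      by (auto simp: nth_Cons split: nat.splits)
  qed
qed (auto simp: walk_def)

lemma wk_Cons: "wk R (x # xs) \<longleftrightarrow> wk R xs \<and> (xs \<noteq> [] \<longrightarrow> (x, hd xs) \<in> R)"
  by (cases xs) auto

lemma wk_append: "wk R (xs @ ys) \<longleftrightarrow> wk R xs \<and> wk R ys \<and> (xs \<noteq> [] \<longrightarrow> ys \<noteq> [] \<longrightarrow> (last xs, hd ys) \<in> R)"
proof (induction xs)
  case Nil then show ?case by simp
next
  case (Cons x xs)
  show ?case
  proof (cases xs)
    case Nil
    then show ?thesis by (simp add: wk_Cons)
  next
    case (Cons y zs)
    then show ?thesis using Cons.IH by (auto simp: wk_Cons)
  qed
qed

lemma wk_snoc: "wk R (xs @ [w]) \<longleftrightarrow> wk R xs \<and> (xs \<noteq> [] \<longrightarrow> (last xs, w) \<in> R)"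
  by (simp add: wk_append)

lemma wk_rev: "wk R xs \<longleftrightarrow> wk (R\<inverse>) (rev xs)"
proof (induction xs)
  case Nil then show ?case by simp
next
  case (Cons x xs)
  have "wk (R\<inverse>) (rev (x # xs)) \<longleftrightarrow> wk (R\<inverse>) (rev xs) \<and> (xs \<noteq> [] \<longrightarrow> (last (rev xs), x) \<in> R\<inverse>)"
    by (simp add: wk_append)
  also have "\<dots> \<longleftrightarrow> wk R xs \<and> (xs \<noteq> [] \<longrightarrow> (x, hd xs) \<in> R)" using Cons.IH by (simp add: last_rev)
  finally show ?case by (simp add: wk_Cons)
qed

lemma wk_trancl: "wk R xs \<Longrightarrow> 2 \<le> length xs \<Longrightarrow> (hd xs, last xs) \<in> R\<^sup>+"
proof (induction xs)
  case Nil then show ?case by simp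
next
  case (Cons x xs)
  show ?case
  proof (cases "2 \<le> length xs")
    case True
    then have "(hd xs, last xs) \<in> R\<^sup>+" using Cons by (simp add: wk_Cons)
    moreover have "(x, hd xs) \<in> R" using Cons.prems True by (auto simp: wk_Cons)
    ultimately show ?thesis using True by (cases xs) auto
  next
    case False
    then obtain y where "xs = [y]" using Cons.prems(2) by (cases xs; cases "tl xs") auto
    then show ?thesis using Cons.prems by auto
  qed
qed

definition tr :: "('a \<times> 'a) set \<Rightarrow> 'a set \<Rightarrow> 'a \<Rightarrow> 'a \<Rightarrow> bool" where
  "tr R S c w \<longleftrightarrow> (\<exists>qs. set qs \<subseteq> S \<and> w \<notin> S \<and> wk R (qs @ [w]) \<and> hd (qs @ [w]) = c)"

lemma tr_unique_aux:
  assumes U: "\<forall>a\<in>S. \<forall>b b'. (a, b) \<in> R \<longrightarrow> (a, b') \<in> R \<longrightarrow> b = b'"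
  shows "set qs \<subseteq> S \<Longrightarrow> w \<notin> S \<Longrightarrow> wk R (qs @ [w]) \<Longrightarrow> hd (qs @ [w]) = c \<Longrightarrow>
    set qs' \<subseteq> S \<Longrightarrow> w' \<notin> S \<Longrightarrow> wk R (qs' @ [w']) \<Longrightarrow> hd (qs' @ [w']) = c \<Longrightarrow> w = w'"
proof (induction qs arbitrary: c qs')
  case Nil
  then have "c = w" by simp
  show ?case
  proof (cases qs')
    case Nil then show ?thesis using Nil.prems by simp
  next
    case (Cons a qs1)
    then have "a = c" using Nil.prems by simp
    then show ?thesis using Nil.prems Cons \<open>c = w\<close> by auto
  qed
next
  case (Cons a qs1)
  then have ac: "a = c" "c \<in> S" by auto
  show ?case
  proof (cases qs')
    case Nil
    then show ?thesis using Cons.prems ac by auto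
  next
    case (Cons a' qs1')
    then have a'c: "a' = c" using Cons.prems by simp
    have s1: "(c, hd (qs1 @ [w])) \<in> R" "wk R (qs1 @ [w])" using Cons.prems(3) ac by (auto simp: wk_Cons)
    have s2: "(c, hd (qs1' @ [w'])) \<in> R" "wk R (qs1' @ [w'])" using Cons.prems(7) a'c Cons by (auto simp: wk_Cons)
    have e: "hd (qs1' @ [w']) = hd (qs1 @ [w])" using U ac s1 s2 by blast
    have q1: "set qs1 \<subseteq> S" using Cons.prems(1) by simp
    have q1': "set qs1' \<subseteq> S" using Cons.prems(5) \<open>qs' = a' # qs1'\<close> by simp
    show ?thesis
      by (rule Cons.IH[of "hd (qs1 @ [w])" qs1', OF q1 Cons.prems(2) s1(2) refl q1' Cons.prems(6) s2(2) e])
  qed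
qed

lemma tr_unique:
  assumes "\<forall>a\<in>S. \<forall>b b'. (a, b) \<in> R \<longrightarrow> (a, b') \<in> R \<longrightarrow> b = b'" "tr R S c w" "tr R S c w'"
  shows "w = w'"
proof -
  obtain qs where q: "set qs \<subseteq> S" "w \<notin> S" "wk R (qs @ [w])" "hd (qs @ [w]) = c"
    using assms(2) unfolding tr_def by blast
  obtain qs' where q': "set qs' \<subseteq> S" "w' \<notin> S" "wk R (qs' @ [w'])" "hd (qs' @ [w']) = c"
    using assms(3) unfolding tr_def by blast
  show ?thesis by (rule tr_unique_aux[OF assms(1) q q'])
qed

lemma indeg_0: "finite R \<Longrightarrow> indeg R v = 0 \<longleftrightarrow> (\<forall>u. (u, v) \<notin> R)"
proof -
  assume f: "finite R"
  have "finite {u. (u, v) \<in> R}" by (rule finite_subset[OF _ finite_imageI[OF f, of fst]]) force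
  then show ?thesis unfolding indeg_def by simp
qed

lemma outdeg_0: "finite R \<Longrightarrow> outdeg R v = 0 \<longleftrightarrow> (\<forall>w. (v, w) \<notin> R)"
proof -
  assume f: "finite R"
  have "finite {w. (v, w) \<in> R}" by (rule finite_subset[OF _ finite_imageI[OF f, of snd]]) force
  then show ?thesis unfolding outdeg_def by simp
qed

lemma indeg_mono: "finite R \<Longrightarrow> Q \<subseteq> R \<Longrightarrow> indeg Q v \<le> indeg R v"
proof -
  assume f: "finite R" and s: "Q \<subseteq> R"
  have "finite {u. (u, v) \<in> R}" by (rule finite_subset[OF _ finite_imageI[OF f, of fst]]) force
  then show ?thesis unfolding indeg_def by (rule card_mono) (use s in auto)
qed

lemma outdeg_mono: "finite R \<Longrightarrow> Q \<subseteq> R \<Longrightarrow> outdeg Q v \<le> outdeg R v"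
proof -
  assume f: "finite R" and s: "Q \<subseteq> R"
  have "finite {w. (v, w) \<in> R}" by (rule finite_subset[OF _ finite_imageI[OF f, of snd]]) force
  then show ?thesis unfolding outdeg_def by (rule card_mono) (use s in auto)
qed

lemma deg1_unique_out: "outdeg R a = 1 \<Longrightarrow> (a, b) \<in> R \<Longrightarrow> (a, b') \<in> R \<Longrightarrow> b = b'"
  unfolding outdeg_def by (metis (mono_tags, lifting) card_1_singletonE mem_Collect_eq singletonD)

lemma deg1_unique_in: "indeg R a = 1 \<Longrightarrow> (b, a) \<in> R \<Longrightarrow> (b', a) \<in> R \<Longrightarrow> b = b'"
  unfolding indeg_def by (metis (mono_tags, lifting) card_1_singletonE mem_Collect_eq singletonD)

lemma deg1_ex_out: "outdeg R a = 1 \<Longrightarrow> \<exists>b. (a, b) \<in> R"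
  unfolding outdeg_def by (metis (mono_tags, lifting) card_1_singletonE mem_Collect_eq singletonI)

lemma deg1_ex_in: "indeg R a = 1 \<Longrightarrow> \<exists>b. (b, a) \<in> R"
  unfolding indeg_def by (metis (mono_tags, lifting) card_1_singletonE mem_Collect_eq singletonI)



locale sm =
  fixes V X :: "'a set" and E G :: "('a \<times> 'a) set"
  assumes rb: "rbpn V E X" and GE: "G \<subseteq> E"
begin

abbreviation "S \<equiv> smoothed_vertices V G"
abbreviation "E' \<equiv> smooth_edges V G"

lemma finV: "finite V" and EV: "E \<subseteq> V \<times> V" and acE: "acyclic E" and Xne: "X \<noteq> {}"
  and Xdef: "X = {v \<in> V. outdeg E v = 0}"
  using rb unfolding rbpn_def by auto

lemma finE: "finite E" using finite_subset[OF EV] finV by blast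
lemma finG: "finite G" using finite_subset[OF GE finE] .
lemma acG: "acyclic G" using acyclic_subset[OF acE GE] .
lemma GV: "G \<subseteq> V \<times> V" using GE EV by blast

lemma S_sub: "S \<subseteq> V" unfolding smoothed_vertices_def by auto

lemma E'_iff: "(u, w) \<in> E' \<longleftrightarrow> u \<in> V \<and> u \<notin> S \<and> w \<in> V \<and> w \<notin> S \<and> (\<exists>ps. set ps \<subseteq> S \<and> wk G (u # ps @ [w]))"
  unfolding smooth_edges_def walk_wk by auto

lemma E'V: "E' \<subseteq> (V - S) \<times> (V - S)" using E'_iff by auto
lemma finE': "finite E'" using finite_subset[OF E'V] finV by blast

lemma root_ex: "\<exists>r. r \<in> V \<and> indeg E r = 0 \<and> (\<forall>v\<in>V. indeg E v = 0 \<longrightarrow> v = r)"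
  using rb unfolding rbpn_def by metis

definition "rho = (SOME r. r \<in> V \<and> indeg E r = 0 \<and> (\<forall>v\<in>V. indeg E v = 0 \<longrightarrow> v = r))"

lemma rho: "rho \<in> V" "indeg E rho = 0" "\<And>v. v \<in> V \<Longrightarrow> indeg E v = 0 \<Longrightarrow> v = rho"
  using someI_ex[OF root_ex] unfolding rho_def by blast+

lemma rho_out: "outdeg E rho \<in> {1, 2}" using rb rho unfolding rbpn_def by blast

lemma indeg_le2: "indeg E v \<le> 2"
proof (cases "v \<in> V")
  case True then show ?thesis using rb unfolding rbpn_def by fastforce
next
  case False
  then have "\<forall>u. (u, v) \<notin> E" using EV by auto
  then have "indeg E v = 0" using indeg_0[OF finE, of v] by simp
  then show ?thesis by simp
qed

lemma outdeg_le2: "outdeg E v \<le> 2"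
proof (cases "v \<in> V")
  case True
  show ?thesis
  proof (cases "indeg E v = 0")
    case True then show ?thesis using rb \<open>v \<in> V\<close> unfolding rbpn_def by fastforce
  next
    case False then show ?thesis using rb \<open>v \<in> V\<close> unfolding rbpn_def by blast
  qed
next
  case False
  then have "\<forall>w. (v, w) \<notin> E" using EV by auto
  then have "outdeg E v = 0" using outdeg_0[OF finE, of v] by simp
  then show ?thesis by simp
qed

lemma dbdE: "dbd E"
  unfolding dbd_def
proof
  fix e :: "'a \<times> 'a"
  have "{f \<in> E. fst f = fst e} = (\<lambda>w. (fst e, w)) ` {w. (fst e, w) \<in> E}" by force
  then have "card {f \<in> E. fst f = fst e} = outdeg E (fst e)"
    unfolding outdeg_def by (simp add: card_image inj_on_def)
  moreover have "{f \<in> E. snd f = snd e} = (\<lambda>u. (u, snd e)) ` {u. (u, snd e) \<in> E}" by force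
  then have "card {f \<in> E. snd f = snd e} = indeg E (snd e)"
    unfolding indeg_def by (simp add: card_image inj_on_def)
  ultimately show "card {f \<in> E. fst f = fst e} \<le> 2 \<and> card {f \<in> E. snd f = snd e} \<le> 2"
    using indeg_le2 outdeg_le2 by simp
qed

lemma in_snd_iff:
  assumes v: "v \<in> V" shows "(\<exists>u. (u, v) \<in> E) \<longleftrightarrow> v \<noteq> rho"
proof
  assume "\<exists>u. (u, v) \<in> E"
  then have "indeg E v \<noteq> 0" using indeg_0[OF finE, of v] by simp
  then show "v \<noteq> rho" using rho(2) by auto
next
  assume "v \<noteq> rho"
  then have "indeg E v \<noteq> 0" using rho(3)[OF v] by auto
  then show "\<exists>u. (u, v) \<in> E" using indeg_0[OF finE, of v] by simp
qed

lemma in_fst_iff: "v \<in> V \<Longrightarrow> (\<exists>w. (v, w) \<in> E) \<longleftrightarrow> v \<notin> X"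
  using Xdef outdeg_0[OF finE] by auto

lemma S_deg: "a \<in> S \<Longrightarrow> outdeg G a = 1 \<and> indeg G a = 1"
  unfolding smoothed_vertices_def by simp

lemma S_out_unique: "a \<in> S \<Longrightarrow> (a, b) \<in> G \<Longrightarrow> (a, b') \<in> G \<Longrightarrow> b = b'"
  by (rule deg1_unique_out) (simp_all add: S_deg)

lemma S_in_unique: "a \<in> S \<Longrightarrow> (b, a) \<in> G \<Longrightarrow> (b', a) \<in> G \<Longrightarrow> b = b'"
  by (rule deg1_unique_in) (simp_all add: S_deg)

lemma S_out_ex: "a \<in> S \<Longrightarrow> \<exists>b. (a, b) \<in> G"
  by (rule deg1_ex_out) (simp add: S_deg)

lemma S_in_ex: "a \<in> S \<Longrightarrow> \<exists>b. (b, a) \<in> G"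
  by (rule deg1_ex_in) (simp add: S_deg)

lemma FT: "c \<in> V \<Longrightarrow> \<exists>w. w \<in> V \<and> tr G S c w"
proof (induction c rule: wf_induct_rule[OF finite_acyclic_wf_converse[OF finG acG]])
  case (1 c)
  show ?case
  proof (cases "c \<in> S")
    case False
    have "tr G S c c" unfolding tr_def using False by (intro exI[of _ "[]"]) auto
    then show ?thesis using 1 by blast
  next
    case True
    obtain d where d: "(c, d) \<in> G" using S_out_ex[OF True] by blast
    then have "d \<in> V" using GV by auto
    then obtain w where w: "w \<in> V" "tr G S d w" using 1 d by blast
    then obtain qs where qs: "set qs \<subseteq> S" "w \<notin> S" "wk G (qs @ [w])" "hd (qs @ [w]) = d"
      unfolding tr_def by blast
    have "tr G S c w" unfolding tr_def
      by (intro exI[of _ "c # qs"]) (use qs True d in \<open>auto simp: wk_Cons\<close>)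
    then show ?thesis using w by blast
  qed
qed

lemma BT: "c \<in> V \<Longrightarrow> \<exists>u. u \<in> V \<and> tr (G\<inverse>) S c u"
proof (induction c rule: wf_induct_rule[OF finite_acyclic_wf[OF finG acG]])
  case (1 c)
  show ?case
  proof (cases "c \<in> S")
    case False
    have "tr (G\<inverse>) S c c" unfolding tr_def using False by (intro exI[of _ "[]"]) auto
    then show ?thesis using 1 by blast
  next
    case True
    obtain p where p: "(p, c) \<in> G" using S_in_ex[OF True] by blast
    then have "p \<in> V" using GV by auto
    then obtain u where u: "u \<in> V" "tr (G\<inverse>) S p u" using 1 p by blast
    then obtain qs where qs: "set qs \<subseteq> S" "u \<notin> S" "wk (G\<inverse>) (qs @ [u])" "hd (qs @ [u]) = p"
      unfolding tr_def by blast
    have "tr (G\<inverse>) S c u" unfolding tr_def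
      by (intro exI[of _ "c # qs"]) (use qs True p in \<open>auto simp: wk_Cons\<close>)
    then show ?thesis using u by blast
  qed
qed

lemma E'_from_tr:
  assumes "v \<in> V" "v \<notin> S" "(v, c) \<in> G" "tr G S c w" "w \<in> V"
  shows "(v, w) \<in> E'"
proof -
  obtain qs where qs: "set qs \<subseteq> S" "w \<notin> S" "wk G (qs @ [w])" "hd (qs @ [w]) = c"
    using assms(4) unfolding tr_def by blast
  have "wk G (v # qs @ [w])" using qs assms(3) by (simp add: wk_Cons)
  then show ?thesis unfolding E'_iff using assms qs by blast
qed

lemma E'_to_tr:
  assumes "(v, w) \<in> E'"
  shows "\<exists>c. (v, c) \<in> G \<and> tr G S c w"
proof -
  obtain ps where ps: "set ps \<subseteq> S" "wk G (v # ps @ [w])" "w \<notin> S" using assms unfolding E'_iff by blast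
  have "(v, hd (ps @ [w])) \<in> G" "wk G (ps @ [w])" using ps(2) by (auto simp: wk_Cons)
  moreover have "tr G S (hd (ps @ [w])) w" unfolding tr_def using ps calculation by blast
  ultimately show ?thesis by blast
qed

lemma E'_from_btr:
  assumes "w \<in> V" "w \<notin> S" "(p, w) \<in> G" "tr (G\<inverse>) S p u" "u \<in> V"
  shows "(u, w) \<in> E'"
proof -
  obtain qs where qs: "set qs \<subseteq> S" "u \<notin> S" "wk (G\<inverse>) (qs @ [u])" "hd (qs @ [u]) = p"
    using assms(4) unfolding tr_def by blast
  have r: "wk G (rev (qs @ [u]))" using qs(3) wk_rev[of "G\<inverse>" "qs @ [u]"] by simp
  have l: "last (rev (qs @ [u])) = p" using qs(4) by (cases qs) (simp_all add: last_rev)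
  have "wk G (rev (qs @ [u]) @ [w])" using r l assms(3) wk_snoc[of G "rev (qs @ [u])" w] by simp
  then have "wk G (u # rev qs @ [w])" by simp
  moreover have "set (rev qs) \<subseteq> S" using qs(1) by simp
  ultimately show ?thesis unfolding E'_iff using assms qs by blast
qed

lemma E'_to_btr:
  assumes "(u, w) \<in> E'"
  shows "\<exists>p. (p, w) \<in> G \<and> tr (G\<inverse>) S p u"
proof -
  obtain ps where ps: "set ps \<subseteq> S" "wk G ((u # ps) @ [w])" "u \<notin> S" using assms unfolding E'_iff by auto
  then have a: "wk G (u # ps)" "(last (u # ps), w) \<in> G" using wk_snoc[of G "u # ps" w] by simp_all
  have "wk (G\<inverse>) (rev (u # ps))" using a(1) wk_rev by blast
  then have b: "wk (G\<inverse>) (rev ps @ [u])" by simp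
  have c: "hd (rev ps @ [u]) = last (u # ps)" by (cases ps rule: rev_cases) auto
  have "tr (G\<inverse>) S (last (u # ps)) u" unfolding tr_def
    by (intro exI[of _ "rev ps"]) (use ps b c in auto)
  then show ?thesis using a(2) by blast
qed

lemma outdeg_E'_le: "outdeg E' v \<le> outdeg G v"
proof -
  define F where "F c = (SOME w. tr G S c w)" for c
  have U: "\<forall>a\<in>S. \<forall>b b'. (a, b) \<in> G \<longrightarrow> (a, b') \<in> G \<longrightarrow> b = b'" using S_out_unique by blast
  have "{w. (v, w) \<in> E'} \<subseteq> F ` {c. (v, c) \<in> G}"
  proof
    fix w assume "w \<in> {w. (v, w) \<in> E'}"
    then obtain c where c: "(v, c) \<in> G" "tr G S c w" using E'_to_tr by blast
    have "tr G S c (F c)" unfolding F_def using someI[of "tr G S c", OF c(2)] .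
    then have "F c = w" by (rule tr_unique[OF U _ c(2)])
    then show "w \<in> F ` {c. (v, c) \<in> G}" using c by blast
  qed
  moreover have "finite {c. (v, c) \<in> G}"
    by (rule finite_subset[OF _ finite_imageI[OF finG, of snd]]) force
  ultimately have "card {w. (v, w) \<in> E'} \<le> card (F ` {c. (v, c) \<in> G})"
    by (intro card_mono finite_imageI)
  also have "\<dots> \<le> card {c. (v, c) \<in> G}" by (rule card_image_le) fact
  finally have "card {w. (v, w) \<in> E'} \<le> card {c. (v, c) \<in> G}" .
  then show ?thesis unfolding outdeg_def .
qed

lemma indeg_E'_le: "indeg E' w \<le> indeg G w"
proof -
  define F where "F c = (SOME u. tr (G\<inverse>) S c u)" for c
  have U: "\<forall>a\<in>S. \<forall>b b'. (a, b) \<in> G\<inverse> \<longrightarrow> (a, b') \<in> G\<inverse> \<longrightarrow> b = b'" using S_in_unique by blast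
  have "{u. (u, w) \<in> E'} \<subseteq> F ` {p. (p, w) \<in> G}"
  proof
    fix u assume "u \<in> {u. (u, w) \<in> E'}"
    then obtain p where p: "(p, w) \<in> G" "tr (G\<inverse>) S p u" using E'_to_btr by blast
    have "tr (G\<inverse>) S p (F p)" unfolding F_def using someI[of "tr (G\<inverse>) S p", OF p(2)] .
    then have "F p = u" by (rule tr_unique[OF U _ p(2)])
    then show "u \<in> F ` {p. (p, w) \<in> G}" using p by blast
  qed
  moreover have "finite {p. (p, w) \<in> G}"
    by (rule finite_subset[OF _ finite_imageI[OF finG, of fst]]) force
  ultimately have "card {u. (u, w) \<in> E'} \<le> card (F ` {p. (p, w) \<in> G})"
    by (intro card_mono finite_imageI)
  also have "\<dots> \<le> card {p. (p, w) \<in> G}" by (rule card_image_le) fact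
  finally have "card {u. (u, w) \<in> E'} \<le> card {p. (p, w) \<in> G}" .
  then show ?thesis unfolding indeg_def .
qed

lemma E'_trancl: "E' \<subseteq> E\<^sup>+"
proof
  fix x assume "x \<in> E'"
  then obtain u w where x: "x = (u, w)" "(u, w) \<in> E'" by (cases x) auto
  then obtain ps where "wk G (u # ps @ [w])" unfolding E'_iff by blast
  then have "(hd (u # ps @ [w]), last (u # ps @ [w])) \<in> G\<^sup>+" by (rule wk_trancl) simp
  then have "(u, w) \<in> G\<^sup>+" by simp
  then show "x \<in> E\<^sup>+" using x trancl_mono[OF _ GE] by blast
qed

lemma support_iff: "support_network V E X G \<longleftrightarrow> G \<in> cov E"
proof
  assume sn: "support_network V E X G"
  then have rb': "rbpn (V - S) E' X" unfolding support_network_def by blast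
  have rho_notS: "rho \<notin> S"
  proof -
    have "\<forall>u. (u, rho) \<notin> E" using rho indeg_0[OF finE] by blast
    then have "\<forall>u. (u, rho) \<notin> G" using GE by blast
    then have "indeg G rho = 0" using indeg_0[OF finG] by blast
    then show ?thesis unfolding smoothed_vertices_def by simp
  qed
  have rho_E': "indeg E' rho = 0"
  proof -
    have "\<forall>u. (u, rho) \<notin> G" using rho indeg_0[OF finE] GE by blast
    then have "\<forall>u. (u, rho) \<notin> E'" using E'_to_btr by blast
    then show ?thesis using indeg_0[OF finE'] by blast
  qed
  have uniq: "\<And>v. v \<in> V - S \<Longrightarrow> indeg E' v = 0 \<Longrightarrow> v = rho"
  proof -
    fix v assume v: "v \<in> V - S" "indeg E' v = 0"
    obtain r where "r \<in> V - S" "indeg E' r = 0" "\<forall>r'. r' \<in> V - S \<and> indeg E' r' = 0 \<longrightarrow> r' = r"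
      using rb' unfolding rbpn_def by metis
    then show "v = rho" using v rho(1) rho_notS rho_E' by blast
  qed
  have "snd ` E \<subseteq> snd ` G"
  proof
    fix v assume "v \<in> snd ` E"
    then obtain u where uv: "(u, v) \<in> E" by force
    then have vV: "v \<in> V" and vr: "v \<noteq> rho" using EV in_snd_iff by auto
    show "v \<in> snd ` G"
    proof (rule ccontr)
      assume "v \<notin> snd ` G"
      then have nG: "\<forall>u. (u, v) \<notin> G" by force
      then have "indeg G v = 0" using indeg_0[OF finG] by blast
      then have "v \<notin> S" unfolding smoothed_vertices_def by simp
      moreover have "indeg E' v = 0" using nG E'_to_btr indeg_0[OF finE'] by blast
      ultimately show False using uniq vV vr by blast
    qed
  qed
  moreover have "fst ` E \<subseteq> fst ` G"
  proof
    fix v assume "v \<in> fst ` E"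
    then obtain w where uv: "(v, w) \<in> E" by force
    then have vV: "v \<in> V" and vX: "v \<notin> X" using EV in_fst_iff by auto
    show "v \<in> fst ` G"
    proof (rule ccontr)
      assume "v \<notin> fst ` G"
      then have nG: "\<forall>w. (v, w) \<notin> G" by force
      then have "outdeg G v = 0" using outdeg_0[OF finG] by blast
      then have "v \<notin> S" unfolding smoothed_vertices_def by simp
      moreover have "outdeg E' v = 0" using nG E'_to_tr outdeg_0[OF finE'] by blast
      ultimately have "v \<in> X" using rb' vV unfolding rbpn_def by blast
      then show False using vX by blast
    qed
  qed
  ultimately show "G \<in> cov E" unfolding cov_def using GE by blast
next
  assume cv: "G \<in> cov E"
  then have sndG: "snd ` G = snd ` E" and fstG: "fst ` G = fst ` E" unfolding cov_def by auto
  have rho_notS: "rho \<notin> S"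
  proof -
    have "\<forall>u. (u, rho) \<notin> G" using rho indeg_0[OF finE] GE by blast
    then have "indeg G rho = 0" using indeg_0[OF finG] by blast
    then show ?thesis unfolding smoothed_vertices_def by simp
  qed
  have rho_E': "indeg E' rho = 0"
  proof -
    have "\<forall>u. (u, rho) \<notin> G" using rho indeg_0[OF finE] GE by blast
    then have "\<forall>u. (u, rho) \<notin> E'" using E'_to_btr by blast
    then show ?thesis using indeg_0[OF finE'] by blast
  qed
  have nonroot: "indeg E' v \<noteq> 0" if v: "v \<in> V - S" "v \<noteq> rho" for v
  proof -
    have "\<exists>u. (u, v) \<in> E" using in_snd_iff v by blast
    then have "v \<in> snd ` G" using sndG by force
    then obtain p where p: "(p, v) \<in> G" by force
    then have "p \<in> V" using GV by auto
    then obtain u where u: "u \<in> V" "tr (G\<inverse>) S p u" using BT by blast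
    have "(u, v) \<in> E'" using E'_from_btr[OF _ _ p u(2) u(1)] v by blast
    then show ?thesis using indeg_0[OF finE'] by blast
  qed
  have haschild: "outdeg E' v \<noteq> 0" if v: "v \<in> V - S" "v \<notin> X" for v
  proof -
    have "\<exists>w. (v, w) \<in> E" using in_fst_iff v by blast
    then have "v \<in> fst ` G" using fstG by force
    then obtain c where c: "(v, c) \<in> G" by force
    then have "c \<in> V" using GV by auto
    then obtain w where w: "w \<in> V" "tr G S c w" using FT by blast
    have "(v, w) \<in> E'" using E'_from_tr[OF _ _ c w(2) w(1)] v by blast
    then show ?thesis using outdeg_0[OF finE'] by blast
  qed
  have out_le: "outdeg E' v \<le> 2" for v using outdeg_E'_le[of v] outdeg_mono[OF finE GE, of v] outdeg_le2[of v] by linarith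
  have in_le: "indeg E' v \<le> 2" for v using indeg_E'_le[of v] indeg_mono[OF finE GE, of v] indeg_le2[of v] by linarith
  have rhoX: "rho \<notin> X" using rho_out Xdef by auto
  have XV': "X \<subseteq> V - S"
  proof
    fix v assume v: "v \<in> X"
    then have "\<forall>w. (v, w) \<notin> E" using Xdef outdeg_0[OF finE] by auto
    then have "\<forall>w. (v, w) \<notin> G" using GE by blast
    then have "outdeg G v = 0" using outdeg_0[OF finG] by blast
    then show "v \<in> V - S" using v Xdef unfolding smoothed_vertices_def by auto
  qed
  have X': "X = {v \<in> V - S. outdeg E' v = 0}"
  proof
    show "X \<subseteq> {v \<in> V - S. outdeg E' v = 0}"
    proof
      fix v assume v: "v \<in> X"
      then have "\<forall>w. (v, w) \<notin> E" using Xdef outdeg_0[OF finE] by auto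
      then have "\<forall>w. (v, w) \<notin> G" using GE by blast
      then have "\<forall>w. (v, w) \<notin> E'" using E'_to_tr by blast
      then show "v \<in> {v \<in> V - S. outdeg E' v = 0}" using XV' v outdeg_0[OF finE'] by blast
    qed
    show "{v \<in> V - S. outdeg E' v = 0} \<subseteq> X" using haschild by blast
  qed
  have "rbpn (V - S) E' X" unfolding rbpn_def
  proof (intro conjI)
    show "finite (V - S)" using finV by simp
    show "E' \<subseteq> (V - S) \<times> (V - S)" by (rule E'V)
    show "\<forall>v. (v, v) \<notin> E'" using E'_trancl acE unfolding acyclic_def by blast
    show "acyclic E'"
    proof (rule acyclic_subset[OF _ E'_trancl])
      show "acyclic (E\<^sup>+)" using acE unfolding acyclic_def by simp
    qed
    show "X \<noteq> {}" by (rule Xne)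
    show "\<exists>!r. r \<in> V - S \<and> indeg E' r = 0"
      using rho(1) rho_notS rho_E' nonroot by blast
    show "\<forall>r\<in>V - S. indeg E' r = 0 \<longrightarrow> outdeg E' r \<in> {1, 2}"
    proof (intro ballI impI)
      fix r assume r: "r \<in> V - S" "indeg E' r = 0"
      then have "r = rho" using nonroot by blast
      then have "outdeg E' r \<noteq> 0" using haschild r rhoX by blast
      then show "outdeg E' r \<in> {1, 2}" using out_le[of r] by auto
    qed
    show "X = {v \<in> V - S. outdeg E' v = 0}" by (rule X')
    show "\<forall>v\<in>V - S. indeg E' v \<noteq> 0 \<longrightarrow> indeg E' v \<in> {1, 2} \<and> outdeg E' v \<le> 2"
    proof (intro ballI impI conjI)
      fix v assume "v \<in> V - S" "indeg E' v \<noteq> 0"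
      then show "indeg E' v \<in> {1, 2}" using in_le[of v] by auto
      show "outdeg E' v \<le> 2" by (rule out_le)
    qed
  qed
  then show "support_network V E X G" unfolding support_network_def using GE by blast
qed

end

lemma support_networks_cov:
  assumes "rbpn V E X"
  shows "support_networks V E X = cov E"
proof (intro set_eqI iffI)
  fix G assume "G \<in> support_networks V E X"
  then have sn: "support_network V E X G" unfolding support_networks_def by simp
  then have "G \<subseteq> E" unfolding support_network_def by simp
  then interpret sm V X E G using assms by unfold_locales
  show "G \<in> cov E" using sn support_iff by blast
next
  fix G assume cv: "G \<in> cov E"
  then have "G \<subseteq> E" unfolding cov_def by simp
  then interpret sm V X E G using assms by unfold_locales
  show "G \<in> support_networks V E X" using cv support_iff unfolding support_networks_def by blast
qed

lemma rbpn_fin_dbd: "rbpn V E X \<Longrightarrow> finite E \<and> dbd E"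
proof -
  assume r: "rbpn V E X"
  interpret sm V X E "{}" using r by unfold_locales auto
  show ?thesis using finE dbdE by blast
qed



theorem theorem9:
  fixes V X :: "'a set" and E :: "('a \<times> 'a) set"
  assumes "rbpn V E X"
  shows "card (support_networks V E X) =
           (\<Prod>Z\<in>{Z. fence E Z}. fib (card Z)) * (\<Prod>Z\<in>{Z. crown E Z}. lucas (card Z)) \<and>
         (\<forall>d::nat. \<exists>c1 c2 :: real. c1 > 0 \<and> c2 > 0 \<and>
           (\<forall>(V' :: 'a set) E' X'. rbpn V' E' X' \<and> card {Z. maximal_zigzag_trail E' Z} = d \<longrightarrow>
              c1 * golden_ratio ^ card E' \<le> real (card (support_networks V' E' X')) \<and>
              real (card (support_networks V' E' X')) \<le> c2 * golden_ratio ^ card E'))"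
proof
  have fd: "finite E" "dbd E" using rbpn_fin_dbd[OF assms] by auto
  show "card (support_networks V E X) =
           (\<Prod>Z\<in>{Z. fence E Z}. fib (card Z)) * (\<Prod>Z\<in>{Z. crown E Z}. lucas (card Z))"
    using support_networks_cov[OF assms] main[OF fd] unfolding FL_def by simp
next
  show "\<forall>d::nat. \<exists>c1 c2 :: real. c1 > 0 \<and> c2 > 0 \<and>
           (\<forall>(V' :: 'a set) E' X'. rbpn V' E' X' \<and> card {Z. maximal_zigzag_trail E' Z} = d \<longrightarrow>
              c1 * golden_ratio ^ card E' \<le> real (card (support_networks V' E' X')) \<and>
              real (card (support_networks V' E' X')) \<le> c2 * golden_ratio ^ card E')"
  proof
    fix d :: nat
    have pp: "golden_ratio ^ (2 * d) > 0" using phi_gt1 by simp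
    show "\<exists>c1 c2 :: real. c1 > 0 \<and> c2 > 0 \<and>
           (\<forall>(V' :: 'a set) E' X'. rbpn V' E' X' \<and> card {Z. maximal_zigzag_trail E' Z} = d \<longrightarrow>
              c1 * golden_ratio ^ card E' \<le> real (card (support_networks V' E' X')) \<and>
              real (card (support_networks V' E' X')) \<le> c2 * golden_ratio ^ card E')"
    proof (intro exI conjI allI impI)
      show "1 / golden_ratio ^ (2 * d) > 0" using pp by simp
      show "(2::real) ^ d > 0" by simp
      fix V' :: "'a set" and E' X'
      assume h: "rbpn V' E' X' \<and> card {Z. maximal_zigzag_trail E' Z} = d"
      have fd': "finite E'" "dbd E'" using rbpn_fin_dbd h by auto
      have sn: "support_networks V' E' X' = cov E'" using support_networks_cov h by blast
      note M = main[OF fd']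
      have M2: "golden_ratio ^ card E' \<le> golden_ratio ^ (2 * card {Z. maximal_zigzag_trail E' Z}) * real (card (cov E'))"
        and M3: "real (card (cov E')) \<le> 2 ^ card {Z. maximal_zigzag_trail E' Z} * golden_ratio ^ card E'"
        using M by blast+
      have l: "golden_ratio ^ card E' \<le> golden_ratio ^ (2 * d) * real (card (cov E'))" using M2 h by simp
      have u: "real (card (cov E')) \<le> 2 ^ d * golden_ratio ^ card E'" using M3 h by simp
      show "1 / golden_ratio ^ (2 * d) * golden_ratio ^ card E' \<le> real (card (support_networks V' E' X'))"
        using l pp unfolding sn by (simp add: field_simps)
      show "real (card (support_networks V' E' X')) \<le> 2 ^ d * golden_ratio ^ card E'"
        using u unfolding sn .
    qed
  qed
qed


end
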